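(* Let $(A,B)$ be an admissible pair of $n\times n$ complex matrices and put $r_A=\mathrm{rank}(A)$, $r_B=\mathrm{rank}(B)$. Then $m:=r_A+r_B-n\ge 0$, and there exists a permutation $\Pi$ of $\{1,\dots,n\}$ such that the boundary condition $A\Psi+B\Psi'=0$ is equivalent (i.e. has exactly the same solution pairs $(\Psi,\Psi')\in\mathbb C^n\times\mathbb C^n$) to the PQRS-form condition $$B_{PQRS}\tilde\Psi'=A_{PQRS}\tilde\Psi,\qquad \tilde\Psi=(\psi_{\Pi(1)}(0),\dots,\psi_{\Pi(n)}(0))^T,\ \tilde\Psi'=(\psi'_{\Pi(1)}(0),\dots,\psi'_{\Pi(n)}(0))^T,$$ for some matrices $P\in\mathbb C^{m\times(n-r_B)}$, $Q\in\mathbb C^{(n-r_A)\times(n-r_B)}$, $R\in\mathbb C^{(n-r_A)\times m}$ and some invertible self-adjoint $S\in\mathbb C^{m\times m}$. For a given admissible permutation $\Pi$, the matrices $P,Q,R,S$ (with $S$ invertible self-adjoint) are uniquely determined; choosing the lexicographically smallest admissible $\Pi$ makes the representation unique.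
   Context: A vertex coupling at a vertex of degree $n$ of a quantum graph is given by boundary conditions $A\Psi+B\Psi'=0$, where $A,B\in\mathbb C^{n\times n}$ and $\Psi=(\psi_1(0),\dots,\psi_n(0))^T$, $\Psi'=(\psi_1'(0),\dots,\psi_n'(0))^T$ are the vectors of boundary values and boundary derivatives of the wave function on the $n$ edges at the vertex. The pair $(A,B)$ is called admissible if the $n\times 2n$ matrix $(A|B)$ has rank $n$ and $AB^*$ is self-adjoint. $I^{(j)}$ denotes the $j\times j$ identity matrix. With $m=r_A+r_B-n$, $a=n-r_A$, $b=n-r_B$, $S\in\mathbb C^{m\times m}$ self-adjoint, $P\in\mathbb C^{m\times b}$, $Q\in\mathbb C^{a\times b}$, $R\in\mathbb C^{a\times m}$, define the $n\times n$ block matrices (block sizes $m,a,b$) $$B_{PQRS}=\begin{pmatrix} I^{(m)} & 0 & P\\ R & I^{(a)} & Q\\ 0&0&0\end{pmatrix},\qquad A_{PQRS}=\begin{pmatrix} S & -SR^* & 0\\ 0&0&0\\ -P^* & (RP-Q)^* & I^{(b)}\end{pmatrix}.$$ *)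

theory Defs
  imports "Jordan_Normal_Form.Schur_Decomposition" "Jordan_Normal_Form.DL_Rank"
begin

definition hcat :: "'a mat \<Rightarrow> 'a mat \<Rightarrow> 'a mat" where
  "hcat A B = mat (dim_row A) (dim_col A + dim_col B)
     (\<lambda>(i,j). if j < dim_col A then A $$ (i,j) else B $$ (i, j - dim_col A))"

definition admissible :: "nat \<Rightarrow> complex mat \<Rightarrow> complex mat \<Rightarrow> bool" where
  "admissible n A B \<longleftrightarrow> A \<in> carrier_mat n n \<and> B \<in> carrier_mat n n \<and>
     vec_space.rank n (hcat A B) = n \<and>
     mat_adjoint (A * mat_adjoint B) = A * mat_adjoint B"

definition blk_idx :: "nat \<Rightarrow> nat \<Rightarrow> nat \<Rightarrow> nat \<times> nat" where
  "blk_idx m a i = (if i < m then (0, i) else if i < m + a then (1, i - m) else (2, i - m - a))"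

text \<open>3x3 block matrix with block sizes m, a, b (rows and columns); Ms ! k ! l is block (k,l).\<close>
definition block3 :: "nat \<Rightarrow> nat \<Rightarrow> nat \<Rightarrow> 'a mat list list \<Rightarrow> 'a mat" where
  "block3 m a b Ms = mat (m + a + b) (m + a + b)
     (\<lambda>(i,j). case blk_idx m a i of (bi, i') \<Rightarrow> case blk_idx m a j of (bj, j') \<Rightarrow>
        (Ms ! bi ! bj) $$ (i', j'))"

definition B_PQRS :: "nat \<Rightarrow> nat \<Rightarrow> nat \<Rightarrow> complex mat \<Rightarrow> complex mat \<Rightarrow> complex mat \<Rightarrow> complex mat" where
  "B_PQRS m a b P Q R = block3 m a b
     [[1\<^sub>m m, 0\<^sub>m m a, P],
      [R, 1\<^sub>m a, Q],
      [0\<^sub>m b m, 0\<^sub>m b a, 0\<^sub>m b b]]"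

definition A_PQRS :: "nat \<Rightarrow> nat \<Rightarrow> nat \<Rightarrow> complex mat \<Rightarrow> complex mat \<Rightarrow> complex mat \<Rightarrow> complex mat \<Rightarrow> complex mat" where
  "A_PQRS m a b P Q R S = block3 m a b
     [[S, - (S * mat_adjoint R), 0\<^sub>m m b],
      [0\<^sub>m a m, 0\<^sub>m a a, 0\<^sub>m a b],
      [- (mat_adjoint P), mat_adjoint (R * P - Q), 1\<^sub>m b]]"

definition perm_vec :: "(nat \<Rightarrow> nat) \<Rightarrow> 'a vec \<Rightarrow> 'a vec" where
  "perm_vec p v = vec (dim_vec v) (\<lambda>i. v $ p i)"

definition PQRS_equiv :: "nat \<Rightarrow> complex mat \<Rightarrow> complex mat \<Rightarrow> (nat \<Rightarrow> nat) \<Rightarrow> nat \<Rightarrow> nat \<Rightarrow> nat \<Rightarrow>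
    complex mat \<Rightarrow> complex mat \<Rightarrow> complex mat \<Rightarrow> complex mat \<Rightarrow> bool" where
  "PQRS_equiv n A B p m a b P Q R S \<longleftrightarrow>
     (\<forall>\<Psi> \<in> carrier_vec n. \<forall>\<Psi>' \<in> carrier_vec n.
        (A *\<^sub>v \<Psi> + B *\<^sub>v \<Psi>' = 0\<^sub>v n) \<longleftrightarrow>
        (B_PQRS m a b P Q R *\<^sub>v perm_vec p \<Psi>' = A_PQRS m a b P Q R S *\<^sub>v perm_vec p \<Psi>))"

definition PQRS_ok :: "nat \<Rightarrow> nat \<Rightarrow> nat \<Rightarrow> complex mat \<Rightarrow> complex mat \<Rightarrow> complex mat \<Rightarrow> complex mat \<Rightarrow> bool" where
  "PQRS_ok m a b P Q R S \<longleftrightarrow> P \<in> carrier_mat m b \<and> Q \<in> carrier_mat a b \<and> R \<in> carrier_mat a m \<and>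
     S \<in> carrier_mat m m \<and> mat_adjoint S = S \<and> invertible_mat S"

end

theory Submission
  imports Defs
begin

definition indep_cols :: "'a::field mat \<Rightarrow> nat set \<Rightarrow> bool" where
 "indep_cols M J \<longleftrightarrow> (\<forall>c. (\<forall>i<dim_row M. (\<Sum>j\<in>J. c j * M $$ (i,j)) = 0) \<longrightarrow> (\<forall>j\<in>J. c j = 0))"

definition spans_cols :: "'a::field mat \<Rightarrow> nat set \<Rightarrow> bool" where
 "spans_cols M J \<longleftrightarrow> (\<forall>k<dim_col M. \<exists>c. \<forall>i<dim_row M. M $$ (i,k) = (\<Sum>j\<in>J. c j * M $$ (i,j)))"

context vec_space begin

lemma indep_cols_inj:
  fixes M :: "'a mat"
  assumes M: "M \<in> carrier_mat n nc" and J: "J \<subseteq> {..<nc}" and ind: "indep_cols M J"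
  shows "inj_on (col M) J"
proof (rule inj_onI, rule ccontr)
  fix j1 j2 assume j: "j1 \<in> J" "j2 \<in> J" "col M j1 = col M j2" "j1 \<noteq> j2"
  define c where "c = (\<lambda>j. if j = j1 then 1 else if j = j2 then - (1::'a) else 0)"
  have fin: "finite J" using J finite_subset by blast
  have "\<forall>i<dim_row M. (\<Sum>j\<in>J. c j * M $$ (i,j)) = 0"
  proof (intro allI impI)
    fix i assume i: "i < dim_row M"
    have "(\<Sum>j\<in>J. c j * M $$ (i,j)) = (\<Sum>j\<in>{j1,j2}. c j * M $$ (i,j))"
      by (rule sum.mono_neutral_right) (use fin j in \<open>auto simp: c_def\<close>)
    also have "\<dots> = M $$ (i,j1) - M $$ (i,j2)" using j by (simp add: c_def)
    also have "M $$ (i,j1) = col M j1 $ i" using i j(1) J M by auto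
    also have "M $$ (i,j2) = col M j2 $ i" using i j(2) J M by auto
    finally show "(\<Sum>j\<in>J. c j * M $$ (i,j)) = 0" using j by simp
  qed
  with ind have "c j1 = 0" unfolding indep_cols_def using j by blast
  thus False using j unfolding c_def by simp
qed

lemma indep_cols_lin_indpt:
  assumes M: "M \<in> carrier_mat n nc" and J: "J \<subseteq> {..<nc}" and ind: "indep_cols M J"
  shows "lin_indpt (col M ` J)"
proof
  assume dep: "lin_dep (col M ` J)"
  have fin: "finite J" using J finite_subset by blast
  have inj: "inj_on (col M) J" using indep_cols_inj[OF assms] .
  have sub: "col M ` J \<subseteq> carrier_vec n" using M J by auto
  from finite_lin_dep[OF finite_imageI[OF fin] dep sub]
  obtain a v where a: "a \<in> col M ` J \<rightarrow> UNIV" "lincomb a (col M ` J) = 0\<^sub>v n" "v \<in> col M ` J" "a v \<noteq> 0"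
    by auto
  define c where "c = (\<lambda>j. a (col M j))"
  have "\<forall>i<dim_row M. (\<Sum>j\<in>J. c j * M $$ (i,j)) = 0"
  proof (intro allI impI)
    fix i assume i: "i < dim_row M"
    hence i': "i < n" using M by auto
    have "(\<Sum>j\<in>J. c j * M $$ (i,j)) = (\<Sum>j\<in>J. a (col M j) * col M j $ i)"
      unfolding c_def using J M i' by (intro sum.cong) auto
    also have "\<dots> = (\<Sum>x\<in>col M ` J. a x * x $ i)" using sum.reindex[OF inj, of "\<lambda>x. a x * x $ i"] by simp
    also have "\<dots> = lincomb a (col M ` J) $ i" using lincomb_index[OF i' sub] by simp
    also have "\<dots> = 0" using a i' by simp
    finally show "(\<Sum>j\<in>J. c j * M $$ (i,j)) = 0" .
  qed
  with ind have "\<forall>j\<in>J. c j = 0" unfolding indep_cols_def by blast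
  with a(3,4) show False unfolding c_def by auto
qed

lemma lin_indpt_indep_cols:
  assumes M: "M \<in> carrier_mat n nc" and J: "J \<subseteq> {..<nc}" and inj: "inj_on (col M) J"
    and li: "lin_indpt (col M ` J)"
  shows "indep_cols M J"
  unfolding indep_cols_def
proof (intro allI impI ballI, rule ccontr)
  fix c j0 assume eq: "\<forall>i<dim_row M. (\<Sum>j\<in>J. c j * M $$ (i,j)) = 0" and j0: "j0 \<in> J" "c j0 \<noteq> 0"
  have fin: "finite J" using J finite_subset by blast
  have sub: "col M ` J \<subseteq> carrier_vec n" using M J by auto
  define a where "a = (\<lambda>x. c (inv_into J (col M) x))"
  have "lincomb a (col M ` J) = 0\<^sub>v n"
  proof (rule eq_vecI)
    show "dim_vec (lincomb a (col M ` J)) = dim_vec (0\<^sub>v n)" using lincomb_dim[OF finite_imageI[OF fin] sub] by simp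
    fix i assume "i < dim_vec (0\<^sub>v n)"
    hence i: "i < n" by simp
    have "lincomb a (col M ` J) $ i = (\<Sum>x\<in>col M ` J. a x * x $ i)" using lincomb_index[OF i sub] by simp
    also have "\<dots> = (\<Sum>j\<in>J. a (col M j) * col M j $ i)" using sum.reindex[OF inj, of "\<lambda>x. a x * x $ i"] by simp
    also have "\<dots> = (\<Sum>j\<in>J. c j * M $$ (i,j))" unfolding a_def using inj J M i by (intro sum.cong) auto
    also have "\<dots> = 0" using eq i M by auto
    finally show "lincomb a (col M ` J) $ i = 0\<^sub>v n $ i" using i by simp
  qed
  moreover have "a (col M j0) \<noteq> 0" unfolding a_def using inj j0 by simp
  ultimately have "lin_dep (col M ` J)"
    using lin_dep_crit[OF finite_imageI[OF fin] subset_refl, where a=a and v="col M j0"] j0 by auto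
  with li show False by simp
qed

lemma span_spans:
  assumes M: "M \<in> carrier_mat n nc" and J: "J \<subseteq> {..<nc}" and inj: "inj_on (col M) J"
    and v: "v \<in> span (col M ` J)"
  shows "\<exists>c. \<forall>i<n. v $ i = (\<Sum>j\<in>J. c j * M $$ (i,j))"
proof -
  have fin: "finite J" using J finite_subset by blast
  have sub: "col M ` J \<subseteq> carrier_vec n" using M J by auto
  from v[unfolded finite_span[OF finite_imageI[OF fin] sub]] obtain a where
    a: "v = lincomb a (col M ` J)" by auto
  show ?thesis
  proof (intro exI allI impI)
    fix i assume i: "i < n"
    have "v $ i = (\<Sum>x\<in>col M ` J. a x * x $ i)" using lincomb_index[OF i sub] a by simp
    also have "\<dots> = (\<Sum>j\<in>J. a (col M j) * col M j $ i)" using sum.reindex[OF inj, of "\<lambda>x. a x * x $ i"] by simp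
    also have "\<dots> = (\<Sum>j\<in>J. a (col M j) * M $$ (i,j))" using J M i by (intro sum.cong) auto
    finally show "v $ i = (\<Sum>j\<in>J. a (col M j) * M $$ (i,j))" .
  qed
qed

lemma set_cols_eq: "set (cols M) = col M ` {..<dim_col M}"
  unfolding cols_def by auto

lemma cols_basis:
  fixes M :: "'a mat"
  assumes M: "M \<in> carrier_mat n nc" and J0: "J0 \<subseteq> {..<nc}" and ind0: "indep_cols M J0"
  shows "\<exists>J. J0 \<subseteq> J \<and> J \<subseteq> {..<nc} \<and> card J = rank M \<and> indep_cols M J \<and> spans_cols M J"
proof -
  define S0 where "S0 = col M ` J0"
  have dc: "dim_col M = nc" "dim_row M = n" using M by auto
  have li0: "lin_indpt S0" unfolding S0_def by (rule indep_cols_lin_indpt[OF M J0 ind0])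
  have inj0: "inj_on (col M) J0" by (rule indep_cols_inj[OF M J0 ind0])
  have S0sub: "S0 \<subseteq> set (cols M)" unfolding S0_def set_cols_eq using J0 dc by auto
  obtain S where S: "finite S" "maximal S (\<lambda>T. T \<subseteq> set (cols M) \<and> lin_indpt T)" "S0 \<subseteq> S"
    using maximal_exists_superset[of "set (cols M)" "\<lambda>T. T \<subseteq> set (cols M) \<and> lin_indpt T" S0] S0sub li0
    by auto
  have Ssub: "S \<subseteq> set (cols M)" and liS: "lin_indpt S" using S(2) unfolding maximal_def by auto
  have rk: "rank M = card S" by (rule rank_card_indpt[OF M S(2)])
  define g where "g = (\<lambda>v. SOME k. k < nc \<and> col M k = v)"
  have g: "g v < nc \<and> col M (g v) = v" if "v \<in> set (cols M)" for v
  proof -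
    from that obtain k where "k < nc" "col M k = v" unfolding set_cols_eq dc by auto
    hence "\<exists>k. k < nc \<and> col M k = v" by blast
    thus ?thesis unfolding g_def by (rule someI_ex)
  qed
  define J where "J = J0 \<union> g ` (S - S0)"
  have Jsub: "J \<subseteq> {..<nc}" unfolding J_def using J0 g Ssub by auto
  have imgJ: "col M ` J = S"
  proof -
    have "col M ` g ` (S - S0) = S - S0"
    proof
      show "col M ` g ` (S - S0) \<subseteq> S - S0" using g Ssub by auto
      show "S - S0 \<subseteq> col M ` g ` (S - S0)"
      proof
        fix v assume "v \<in> S - S0"
        hence "col M (g v) = v" "g v \<in> g ` (S - S0)" using g Ssub by auto
        thus "v \<in> col M ` g ` (S - S0)" by (metis image_eqI)
      qed
    qed
    moreover have "col M ` J = col M ` J0 \<union> col M ` g ` (S - S0)" unfolding J_def by (rule image_Un)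
    ultimately show ?thesis using S(3) unfolding S0_def by auto
  qed
  have injJ: "inj_on (col M) J"
  proof (rule inj_onI)
    fix x y assume x: "x \<in> J" and y: "y \<in> J" and eq: "col M x = col M y"
    show "x = y"
    proof (cases "x \<in> J0")
      case True
      show ?thesis
      proof (cases "y \<in> J0")
        case True
        with \<open>x \<in> J0\<close> eq inj0 show ?thesis by (auto dest: inj_onD)
      next
        case False
        then obtain v where v: "v \<in> S - S0" "y = g v" using y unfolding J_def by auto
        hence "col M y = v" using g Ssub by auto
        moreover have "col M x \<in> S0" unfolding S0_def using True by auto
        ultimately show ?thesis using v eq by auto
      qed
    next
      case False
      then obtain v where v: "v \<in> S - S0" "x = g v" using x unfolding J_def by auto
      hence cx: "col M x = v" using g Ssub by auto
      show ?thesis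
      proof (cases "y \<in> J0")
        case True
        hence "col M y \<in> S0" unfolding S0_def by auto
        thus ?thesis using v eq cx by auto
      next
        case False
        then obtain w where w: "w \<in> S - S0" "y = g w" using y unfolding J_def by auto
        hence "col M y = w" using g Ssub by auto
        thus ?thesis using v w eq cx by auto
      qed
    qed
  qed
  have cardJ: "card J = card S" using card_image[OF injJ] imgJ by simp
  have indJ: "indep_cols M J"
    by (rule lin_indpt_indep_cols[OF M Jsub injJ], unfold imgJ, rule liS)
  have Scar: "S \<subseteq> carrier_vec n" using Ssub M unfolding set_cols_eq by auto
  have spJ: "spans_cols M J"
    unfolding spans_cols_def
  proof (intro allI impI)
    fix k assume "k < dim_col M"
    hence k: "k < nc" using dc by simp
    have ck: "col M k \<in> carrier_vec n" using M k by auto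
    have "col M k \<in> span S"
    proof (cases "col M k \<in> S")
      case True
      thus ?thesis using in_own_span[OF Scar] by auto
    next
      case False
      have "col M k \<in> set (cols M)" unfolding set_cols_eq using k dc by auto
      hence "S \<union> {col M k} \<subseteq> set (cols M)" using Ssub by auto
      moreover have "S \<union> {col M k} \<noteq> S" using False by auto
      moreover have mx: "\<And>B. S \<subseteq> B \<Longrightarrow> B \<subseteq> set (cols M) \<and> lin_indpt B \<Longrightarrow> B = S"
        using S(2) unfolding maximal_def by auto
      ultimately have "\<not> lin_indpt (S \<union> {col M k})" by (metis Un_upper1)
      thus ?thesis using lin_dep_iff_in_span[OF Scar liS ck False] by simp
    qed
    hence "col M k \<in> span (col M ` J)" using imgJ by simp
    from span_spans[OF M Jsub injJ this] obtain c where c: "\<forall>i<n. col M k $ i = (\<Sum>j\<in>J. c j * M $$ (i,j))"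
      by (elim exE)
    show "\<exists>c. \<forall>i<dim_row M. M $$ (i, k) = (\<Sum>j\<in>J. c j * M $$ (i, j))"
      using c k M by (intro exI[of _ c]) auto
  qed
  have "J0 \<subseteq> J" unfolding J_def by blast
  thus ?thesis using Jsub cardJ rk indJ spJ by (intro exI[of _ J] conjI) simp_all
qed

end


lemma sum_lessThan_add: "(\<Sum>k<x+(y::nat). f k) = (\<Sum>k<x. f k) + (\<Sum>k<y. f (x+k))"
  by (induction y) (auto simp: add.assoc)

lemma mat_vec_index: "A \<in> carrier_mat nr nc \<Longrightarrow> v \<in> carrier_vec nc \<Longrightarrow> i < nr \<Longrightarrow>
   (A *\<^sub>v v) $ i = (\<Sum>j<nc. A $$ (i,j) * v $ j)"
  by (auto simp: mult_mat_vec_def scalar_prod_def atLeast0LessThan intro!: sum.cong)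

lemma mat_mult_index: "A \<in> carrier_mat nr n \<Longrightarrow> B \<in> carrier_mat n nc \<Longrightarrow> i < nr \<Longrightarrow> j < nc \<Longrightarrow>
   (A * B) $$ (i,j) = (\<Sum>k<n. A $$ (i,k) * B $$ (k,j))"
  by (auto simp: scalar_prod_def atLeast0LessThan intro!: sum.cong)

lemma adj_dims[simp]: "dim_row (mat_adjoint M) = dim_col M" "dim_col (mat_adjoint M) = dim_row M"
  by (simp_all add: mat_adjoint_def mat_of_rows_def)

lemma adj_index[simp]: "i < dim_col M \<Longrightarrow> j < dim_row M \<Longrightarrow> mat_adjoint M $$ (i,j) = conjugate (M $$ (j,i))"
  unfolding mat_adjoint_def mat_of_rows_def by simp

lemma adj_carrier: "M \<in> carrier_mat r c \<Longrightarrow> mat_adjoint M \<in> carrier_mat c r"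
  by auto

lemma adj_adj: "mat_adjoint (mat_adjoint (M :: complex mat)) = M"
  by (rule eq_matI) auto

lemma adj_mult: assumes X: "(X :: complex mat) \<in> carrier_mat r k" and Y: "Y \<in> carrier_mat k c"
  shows "mat_adjoint (X * Y) = mat_adjoint Y * mat_adjoint X"
proof (rule eq_matI)
  fix i j assume i: "i < dim_row (mat_adjoint Y * mat_adjoint X)" and j: "j < dim_col (mat_adjoint Y * mat_adjoint X)"
  hence i': "i < c" and j': "j < r" using X Y by auto
  have "mat_adjoint (X * Y) $$ (i,j) = cnj ((X * Y) $$ (j,i))" using i' j' X Y by simp
  also have "\<dots> = cnj (\<Sum>l<k. X $$ (j,l) * Y $$ (l,i))" using mat_mult_index[OF X Y j' i'] by simp
  also have "\<dots> = (\<Sum>l<k. mat_adjoint Y $$ (i,l) * mat_adjoint X $$ (l,j))"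
    using X Y i' j' by (simp add: mult.commute)
  also have "\<dots> = (mat_adjoint Y * mat_adjoint X) $$ (i,j)"
    using mat_mult_index[OF adj_carrier[OF Y] adj_carrier[OF X] i' j'] by simp
  finally show "mat_adjoint (X * Y) $$ (i,j) = (mat_adjoint Y * mat_adjoint X) $$ (i,j)" .
qed (use X Y in auto)

lemma det_ne0_cols: "(N :: 'a :: field mat) \<in> carrier_mat n n \<Longrightarrow> (\<forall>v\<in>carrier_vec n. N *\<^sub>v v = 0\<^sub>v n \<longrightarrow> v = 0\<^sub>v n) \<Longrightarrow> det N \<noteq> 0"
  using det_0_iff_vec_prod_zero_field by blast

lemma det_ne0_inj: "(N :: 'a :: field mat) \<in> carrier_mat n n \<Longrightarrow> det N \<noteq> 0 \<Longrightarrow> v \<in> carrier_vec n \<Longrightarrow> N *\<^sub>v v = 0\<^sub>v n \<Longrightarrow> v = 0\<^sub>v n"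
  using det_0_iff_vec_prod_zero_field by blast

lemma det_ne0_inverse: assumes N: "(N :: 'a :: field mat) \<in> carrier_mat n n" and d: "det N \<noteq> 0"
  shows "\<exists>C\<in>carrier_mat n n. C * N = 1\<^sub>m n \<and> N * C = 1\<^sub>m n"
  using det_non_zero_imp_unit[OF N d, of "()"] unfolding Units_def ring_mat_def by auto

lemma hcat_carrier: "A \<in> carrier_mat n n \<Longrightarrow> B \<in> carrier_mat n n \<Longrightarrow> hcat A B \<in> carrier_mat n (n+n)"
  unfolding hcat_def by auto

lemma hcat_index: "A \<in> carrier_mat n n \<Longrightarrow> B \<in> carrier_mat n n \<Longrightarrow> i < n \<Longrightarrow> k < n + n \<Longrightarrow>
   hcat A B $$ (i,k) = (if k < n then A $$ (i,k) else B $$ (i,k-n))"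
  unfolding hcat_def by auto

lemma adm_left_kernel:
  assumes adm: "admissible n A B" and z: "z \<in> carrier_vec n"
   and zA: "\<forall>j<n. (\<Sum>i<n. z $ i * A $$ (i,j)) = 0" and zB: "\<forall>j<n. (\<Sum>i<n. z $ i * B $$ (i,j)) = 0"
  shows "z = 0\<^sub>v n"
proof -
  have A: "A \<in> carrier_mat n n" and B: "B \<in> carrier_mat n n" and rk: "vec_space.rank n (hcat A B) = n"
    using adm unfolding admissible_def by auto
  define H where "H = hcat A B"
  have H: "H \<in> carrier_mat n (n+n)" unfolding H_def by (rule hcat_carrier[OF A B])
  have "indep_cols H {}" unfolding indep_cols_def by simp
  from vec_space.cols_basis[OF H _ this] obtain J where
    J: "J \<subseteq> {..<n+n}" "card J = vec_space.rank n H" "indep_cols H J" by auto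
  have cJ: "card J = n" using J(2) rk unfolding H_def by simp
  have fin: "finite J" using J(1) finite_subset by blast
  obtain h where h: "bij_betw h {..<n} J" using ex_bij_betw_nat_finite[OF fin] cJ by (auto simp: atLeast0LessThan)
  have hJ: "j < n \<Longrightarrow> h j \<in> J" for j using h unfolding bij_betw_def by auto
  define N0 where "N0 = mat n n (\<lambda>(i,j). H $$ (i, h j))"
  have N0: "N0 \<in> carrier_mat n n" unfolding N0_def by simp
  have "det N0 \<noteq> 0"
  proof (rule det_ne0_cols[OF N0], intro ballI impI)
    fix v :: "complex vec" assume v: "v \<in> carrier_vec n" and eq: "N0 *\<^sub>v v = 0\<^sub>v n"
    define c where "c = (\<lambda>k. v $ (inv_into {..<n} h k))"
    have "\<forall>i<dim_row H. (\<Sum>k\<in>J. c k * H $$ (i,k)) = 0"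
    proof (intro allI impI)
      fix i assume "i < dim_row H"
      hence i: "i < n" using H by simp
      have "(\<Sum>k\<in>J. c k * H $$ (i,k)) = (\<Sum>j\<in>{..<n}. c (h j) * H $$ (i, h j))"
        using sum.reindex_bij_betw[OF h, of "\<lambda>k. c k * H $$ (i,k)"] by simp
      also have "\<dots> = (\<Sum>j<n. H $$ (i, h j) * v $ j)" unfolding c_def
        using h by (intro sum.cong) (auto simp: bij_betw_def inv_into_f_f)
      also have "\<dots> = (N0 *\<^sub>v v) $ i" unfolding mat_vec_index[OF N0 v i] unfolding N0_def
        using i by (intro sum.cong) auto
      also have "\<dots> = 0" using eq i by simp
      finally show "(\<Sum>k\<in>J. c k * H $$ (i,k)) = 0" .
    qed
    with J(3) have c0: "\<forall>k\<in>J. c k = 0" unfolding indep_cols_def by blast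
    show "v = 0\<^sub>v n"
    proof (rule eq_vecI)
      fix j assume "j < dim_vec (0\<^sub>v n)"
      hence j: "j < n" by simp
      have "v $ j = c (h j)" unfolding c_def using h j by (auto simp: bij_betw_def inv_into_f_f)
      thus "v $ j = 0\<^sub>v n $ j" using c0 hJ[OF j] j by simp
    qed (use v in simp)
  qed
  hence dT: "det (transpose_mat N0) \<noteq> 0" using det_transpose[OF N0] by simp
  have NT: "transpose_mat N0 \<in> carrier_mat n n" using N0 by simp
  have "transpose_mat N0 *\<^sub>v z = 0\<^sub>v n"
  proof (rule eq_vecI)
    fix j assume "j < dim_vec (0\<^sub>v n)"
    hence j: "j < n" by simp
    have hj: "h j < n + n" using hJ[OF j] J(1) by auto
    have "(transpose_mat N0 *\<^sub>v z) $ j = (\<Sum>i<n. transpose_mat N0 $$ (j,i) * z $ i)"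
      by (rule mat_vec_index[OF NT z j])
    also have "\<dots> = (\<Sum>i<n. z $ i * H $$ (i, h j))" unfolding N0_def using j
      by (intro sum.cong) auto
    also have "\<dots> = 0"
    proof (cases "h j < n")
      case True
      hence "(\<Sum>i<n. z $ i * H $$ (i, h j)) = (\<Sum>i<n. z $ i * A $$ (i, h j))"
        unfolding H_def using hcat_index[OF A B _ hj] by (intro sum.cong) auto
      thus ?thesis using zA True by simp
    next
      case False
      hence "(\<Sum>i<n. z $ i * H $$ (i, h j)) = (\<Sum>i<n. z $ i * B $$ (i, h j - n))"
        unfolding H_def using hcat_index[OF A B _ hj] by (intro sum.cong) auto
      thus ?thesis using zB False hj by simp
    qed
    finally show "(transpose_mat N0 *\<^sub>v z) $ j = 0\<^sub>v n $ j" using j by simp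
  qed (use NT in simp)
  thus ?thesis using det_ne0_inj[OF NT dT z] by simp
qed



lemma B_PQRS_index:
  assumes i: "i < m+a+b" and j: "j < m+a+b"
    and P: "P \<in> carrier_mat m b" and Q: "Q \<in> carrier_mat a b" and R: "R \<in> carrier_mat a m"
  shows "B_PQRS m a b P Q R $$ (i,j) =
   (if i < m then (if j < m then (if i = j then 1 else 0) else if j < m+a then 0 else P $$ (i, j-m-a))
    else if i < m+a then (if j < m then R $$ (i-m, j) else if j < m+a then (if i = j then 1 else 0) else Q $$ (i-m, j-m-a))
    else 0)"
  using i j P Q R unfolding B_PQRS_def block3_def blk_idx_def by (auto simp: Let_def)

lemma A_PQRS_index:
  assumes i: "i < m+a+b" and j: "j < m+a+b"
    and P: "P \<in> carrier_mat m b" and Q: "Q \<in> carrier_mat a b" and R: "R \<in> carrier_mat a m"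
    and S: "S \<in> carrier_mat m m"
  shows "A_PQRS m a b P Q R S $$ (i,j) =
   (if i < m then (if j < m then S $$ (i,j) else if j < m+a then - (\<Sum>l<m. S $$ (i,l) * cnj (R $$ (j-m,l))) else 0)
    else if i < m+a then 0
    else (if j < m then - cnj (P $$ (j, i-m-a))
          else if j < m+a then cnj ((\<Sum>l<m. R $$ (j-m,l) * P $$ (l,i-m-a)) - Q $$ (j-m, i-m-a))
          else (if i = j then 1 else 0)))"
proof -
  have e1: "(S * mat_adjoint R) $$ (i',j') = (\<Sum>l<m. S $$ (i',l) * cnj (R $$ (j',l)))" if "i' < m" "j' < a" for i' j'
    using mat_mult_index[OF S adj_carrier[OF R] that] that R by simp
  have e0: "(- (S * mat_adjoint R)) $$ (i',j') = - (\<Sum>l<m. S $$ (i',l) * cnj (R $$ (j',l)))" if "i' < m" "j' < a" for i' j'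
    using e1[OF that] that R S by simp
  have e2: "(R * P) $$ (i',j') = (\<Sum>l<m. R $$ (i',l) * P $$ (l,j'))" if "i' < a" "j' < b" for i' j'
    using mat_mult_index[OF R P that] .
  show ?thesis
    using i j P Q R S unfolding A_PQRS_def block3_def blk_idx_def
    by (auto simp: Let_def e0 e2 simp del: index_mult_mat)
qed



definition "S_of m f = mat m m (\<lambda>(i,j). - f i j)"
definition "R_of m a X = mat a m (\<lambda>(i,j). - cnj (X j (m+i)))"
definition "P_of m a b g = mat m b (\<lambda>(i,j). g i (m+a+j))"
definition "Q_of m a b g X = mat a b (\<lambda>(i,j). g (m+i) (m+a+j) + (\<Sum>l<m. R_of m a X $$ (i,l) * g l (m+a+j)))"
definition "Lof m a X (h :: nat \<Rightarrow> nat \<Rightarrow> complex) i j = (if i < m then h i j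
   else if i < m+a then h i j + (\<Sum>l<m. R_of m a X $$ (i-m,l) * h l j) else - h i j)"

lemma sum_delta_mult: "finite A \<Longrightarrow> (\<Sum>l\<in>A. h l * (if l = j then 1 else (0::'a::semiring_1))) = (if j \<in> A then h j else 0)"
proof -
  assume A: "finite A"
  have "(\<Sum>l\<in>A. h l * (if l = j then 1 else (0::'a))) = (\<Sum>l\<in>A. if l = j then h l else 0)"
    by (intro sum.cong) auto
  thus ?thesis using A by (simp add: sum.delta')
qed

lemma sum_delta_mult': "finite A \<Longrightarrow> (\<Sum>l\<in>A. h l * (if j = l then 1 else (0::'a::semiring_1))) = (if j \<in> A then h j else 0)"
proof -
  assume A: "finite A"
  have "(\<Sum>l\<in>A. h l * (if j = l then 1 else (0::'a))) = (\<Sum>l\<in>A. if j = l then h l else 0)"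
    by (intro sum.cong) auto
  thus ?thesis using A by (simp add: sum.delta)
qed

locale core =
  fixes m a b :: nat and f g X Y :: "nat \<Rightarrow> nat \<Rightarrow> complex"
  assumes g1: "\<And>i j. i < m+a+b \<Longrightarrow> j < m+a \<Longrightarrow> g i j = (if i = j then 1 else 0)"
    and g2: "\<And>i j. m+a \<le> i \<Longrightarrow> i < m+a+b \<Longrightarrow> j < m+a+b \<Longrightarrow> g i j = 0"
    and f1: "\<And>i j. i < m+a+b \<Longrightarrow> m+a \<le> j \<Longrightarrow> j < m+a+b \<Longrightarrow> f i j = (if i = j then 1 else 0)"
    and fs1: "\<And>i j. i < m+a \<Longrightarrow> j < m+a \<Longrightarrow> f i j = cnj (f j i)"
    and fs2: "\<And>i j. m+a \<le> i \<Longrightarrow> i < m+a+b \<Longrightarrow> j < m+a \<Longrightarrow> f i j = - cnj (g j i)"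
    and fx: "\<And>i j. m \<le> j \<Longrightarrow> j < m+a \<Longrightarrow> i < m+a+b \<Longrightarrow>
        f i j = (\<Sum>l<m. X l j * f i l) + (\<Sum>l<b. Y l j * f i (m+a+l))"
    and ind: "\<And>V. (\<forall>i<m+a+b. (\<Sum>l<m. V l * f i l) + (\<Sum>l<b. V (m+a+l) * f i (m+a+l)) = 0) \<Longrightarrow> \<forall>l<m. V l = 0"
begin

lemma D': assumes i: "i < m" and j: "m \<le> j" "j < m+a"
  shows "f i j = (\<Sum>l<m. X l j * f i l)"
proof -
  have "(\<Sum>l<b. Y l j * f i (m+a+l)) = 0"
    using i by (intro sum.neutral) (auto simp: f1)
  thus ?thesis using fx[OF j] i by simp
qed

lemma D: assumes i: "m \<le> i" "i < m+a" and j: "j < m+a+b"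
  shows "f i j = (\<Sum>l<m. cnj (X l i) * f l j)"
proof (cases "j < m+a")
  case True
  have z: "(\<Sum>l<b. Y l i * f j (m+a+l)) = 0"
    using True by (intro sum.neutral) (auto simp: f1)
  have "f i j = cnj (f j i)" by (rule fs1) (use i True in auto)
  also have "\<dots> = cnj (\<Sum>l<m. X l i * f j l)" using fx[OF i, of j] z j by simp
  also have "\<dots> = (\<Sum>l<m. cnj (X l i) * cnj (f j l))" by simp
  also have "\<dots> = (\<Sum>l<m. cnj (X l i) * f l j)"
  proof (intro sum.cong refl)
    fix l assume "l \<in> {..<m}"
    hence "f l j = cnj (f j l)" using True by (intro fs1) auto
    thus "cnj (X l i) * cnj (f j l) = cnj (X l i) * f l j" by simp
  qed
  finally show ?thesis .
next
  case False
  have "f i j = 0" using f1 i j False by simp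
  moreover have "(\<Sum>l<m. cnj (X l i) * f l j) = 0"
    using False j by (intro sum.neutral) (auto simp: f1)
  ultimately show ?thesis by simp
qed

abbreviation "PP \<equiv> P_of m a b g"
abbreviation "QQ \<equiv> Q_of m a b g X"
abbreviation "RR \<equiv> R_of m a X"
abbreviation "SS \<equiv> S_of m f"

lemma carriers: "PP \<in> carrier_mat m b" "QQ \<in> carrier_mat a b" "RR \<in> carrier_mat a m" "SS \<in> carrier_mat m m"
  unfolding P_of_def Q_of_def R_of_def S_of_def by auto

lemma core_B: assumes i: "i < m+a+b" and j: "j < m+a+b"
  shows "B_PQRS m a b PP QQ RR $$ (i,j) = Lof m a X g i j"
proof -
  note Bi = B_PQRS_index[OF i j carriers(1-3)]
  show ?thesis
  proof (cases "i < m")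
    case True
    thus ?thesis unfolding Bi Lof_def using i j by (auto simp: g1 P_of_def)
  next
    case F1: False
    show ?thesis
    proof (cases "i < m+a")
      case True
      show ?thesis
      proof (cases "j < m")
        case jm: True
        have "(\<Sum>l<m. RR $$ (i-m,l) * g l j) = (\<Sum>l<m. RR $$ (i-m,l) * (if l = j then 1 else 0))"
          using jm by (intro sum.cong refl) (simp add: g1)
        also have "\<dots> = RR $$ (i-m, j)" using jm by (simp add: sum_delta_mult)
        finally show ?thesis unfolding Bi Lof_def using i j F1 True jm by (auto simp: g1)
      next
        case jm: False
        show ?thesis
        proof (cases "j < m+a")
          case ja: True
          have "(\<Sum>l<m. RR $$ (i-m,l) * g l j) = 0"
            using jm ja by (intro sum.neutral) (auto simp: g1)
          thus ?thesis unfolding Bi Lof_def using i j F1 True jm ja by (auto simp: g1)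
        next
          case ja: False
          have "QQ $$ (i-m, j-m-a) = g i j + (\<Sum>l<m. RR $$ (i-m,l) * g l j)"
            unfolding Q_of_def using F1 True ja i j by auto
          thus ?thesis unfolding Bi Lof_def using i j F1 True jm ja by auto
        qed
      qed
    next
      case False
      thus ?thesis unfolding Bi Lof_def using i j F1 by (auto simp: g2)
    qed
  qed
qed

lemma core_A: assumes i: "i < m+a+b" and j: "j < m+a+b"
  shows "A_PQRS m a b PP QQ RR SS $$ (i,j) = - Lof m a X f i j"
proof -
  note Ai = A_PQRS_index[OF i j carriers]
  show ?thesis
  proof (cases "i < m")
    case im: True
    show ?thesis
    proof (cases "j < m")
      case True
      thus ?thesis unfolding Ai Lof_def using im by (simp add: S_of_def)
    next
      case jm: False
      show ?thesis
      proof (cases "j < m+a")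
        case ja: True
        have "(\<Sum>l<m. SS $$ (i,l) * cnj (RR $$ (j-m,l))) = (\<Sum>l<m. X l j * f i l)"
          using im jm ja by (intro sum.cong refl) (auto simp: S_of_def R_of_def)
        thus ?thesis unfolding Ai Lof_def using im jm ja D'[OF im _ ja] by simp
      next
        case ja: False
        thus ?thesis unfolding Ai Lof_def using im jm i j by (simp add: f1)
      qed
    qed
  next
    case F1: False
    show ?thesis
    proof (cases "i < m+a")
      case ia: True
      have "(\<Sum>l<m. RR $$ (i-m,l) * f l j) = - (\<Sum>l<m. cnj (X l i) * f l j)"
        using F1 ia by (simp add: R_of_def sum_negf[symmetric])
      hence "Lof m a X f i j = 0" unfolding Lof_def using F1 ia D[of i j] j by simp
      thus ?thesis unfolding Ai using F1 ia by simp
    next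
      case ia: False
      have Lf: "Lof m a X f i j = - f i j" unfolding Lof_def using F1 ia by simp
      show ?thesis
      proof (cases "j < m")
        case True
        thus ?thesis unfolding Ai Lf using F1 ia i j by (simp add: P_of_def fs2)
      next
        case jm: False
        show ?thesis
        proof (cases "j < m+a")
          case ja: True
          have "(\<Sum>l<m. RR $$ (j-m,l) * PP $$ (l,i-m-a)) = (\<Sum>l<m. RR $$ (j-m,l) * g l i)"
            using ia i by (intro sum.cong refl) (simp add: P_of_def)
          moreover have "QQ $$ (j-m, i-m-a) = g j i + (\<Sum>l<m. RR $$ (j-m,l) * g l i)"
            unfolding Q_of_def using jm ja ia i j by auto
          ultimately show ?thesis unfolding Ai Lf using F1 ia jm ja i j by (simp add: fs2)
        next
          case ja: False
          thus ?thesis unfolding Ai Lf using F1 ia jm i j by (simp add: f1)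
        qed
      qed
    qed
  qed
qed

end


context core begin

lemma S_adj: "mat_adjoint SS = SS"
proof (rule eq_matI)
  fix i j assume i: "i < dim_row SS" and j: "j < dim_col SS"
  hence i': "i < m" and j': "j < m" by (auto simp: S_of_def)
  have "f i j = cnj (f j i)" by (rule fs1) (use i' j' in auto)
  thus "mat_adjoint SS $$ (i,j) = SS $$ (i,j)" using i' j' by (simp add: S_of_def)
qed (auto simp: S_of_def)

lemma S_det: "det SS \<noteq> 0"
proof (rule det_ne0_cols[OF carriers(4)], intro ballI impI)
  fix v :: "complex vec" assume v: "v \<in> carrier_vec m" and Sv: "SS *\<^sub>v v = 0\<^sub>v m"
  have e: "(\<Sum>l<m. f i l * v $ l) = 0" if i: "i < m" for i
  proof -
    have "(SS *\<^sub>v v) $ i = (\<Sum>l<m. SS $$ (i,l) * v $ l)" by (rule mat_vec_index[OF carriers(4) v i])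
    also have "\<dots> = - (\<Sum>l<m. f i l * v $ l)" using i by (simp add: S_of_def sum_negf[symmetric])
    finally show ?thesis using Sv i by simp
  qed
  define y where "y = (\<lambda>k. (\<Sum>l<m. f (m+a+k) l * v $ l))"
  define V where "V = (\<lambda>l. if l < m then v $ l else - y (l - m - a))"
  have "\<forall>i<m+a+b. (\<Sum>l<m. V l * f i l) + (\<Sum>l<b. V (m+a+l) * f i (m+a+l)) = 0"
  proof (intro allI impI)
    fix i assume i: "i < m+a+b"
    have s1: "(\<Sum>l<m. V l * f i l) = (\<Sum>l<m. f i l * v $ l)" unfolding V_def by (intro sum.cong) auto
    have s2: "(\<Sum>l<b. V (m+a+l) * f i (m+a+l)) = - (\<Sum>l<b. y l * (if i = m+a+l then 1 else 0))"
      unfolding V_def using i by (auto simp: f1 sum_negf[symmetric] intro!: sum.cong)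
    show "(\<Sum>l<m. V l * f i l) + (\<Sum>l<b. V (m+a+l) * f i (m+a+l)) = 0"
    proof (cases "i < m+a")
      case True
      have "(\<Sum>l<b. y l * (if i = m+a+l then 1 else 0)) = 0" using True by (intro sum.neutral) auto
      moreover have "(\<Sum>l<m. f i l * v $ l) = 0"
      proof (cases "i < m")
        case True thus ?thesis using e by simp
      next
        case False
        have "(\<Sum>l<m. f i l * v $ l) = (\<Sum>l<m. (\<Sum>k<m. cnj (X k i) * f k l) * v $ l)"
          using False \<open>i < m+a\<close> D by (intro sum.cong refl) auto
        also have "\<dots> = (\<Sum>l<m. \<Sum>k<m. cnj (X k i) * (f k l * v $ l))"
          by (simp add: sum_distrib_right mult.assoc)
        also have "\<dots> = (\<Sum>k<m. \<Sum>l<m. cnj (X k i) * (f k l * v $ l))"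
          by (rule sum.swap)
        also have "\<dots> = (\<Sum>k<m. cnj (X k i) * (\<Sum>l<m. f k l * v $ l))"
          by (simp add: sum_distrib_left)
        also have "\<dots> = 0" using e by simp
        finally show ?thesis .
      qed
      ultimately show ?thesis using s1 s2 by simp
    next
      case False
      then obtain k where k: "i = m+a+k" "k < b" using i by (metis add_diff_inverse_nat add_less_cancel_left)
      have "(\<Sum>l<b. y l * (if i = m+a+l then 1 else 0)) = y k"
      proof -
        have "(\<Sum>l<b. y l * (if i = m+a+l then 1 else 0)) = (\<Sum>l<b. y l * (if l = k then 1 else 0))"
          using k by (intro sum.cong refl) auto
        thus ?thesis using k by (simp add: sum_delta_mult)
      qed
      moreover have "(\<Sum>l<m. f i l * v $ l) = y k" unfolding y_def k(1) ..
      ultimately show ?thesis using s1 s2 by simp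
    qed
  qed
  from ind[OF this] have "\<forall>l<m. V l = 0" .
  hence "\<forall>l<m. v $ l = 0" unfolding V_def by auto
  thus "v = 0\<^sub>v m" using v by (intro eq_vecI) auto
qed

lemma S_inv: "invertible_mat SS"
proof -
  obtain C where C: "C \<in> carrier_mat m m" "C * SS = 1\<^sub>m m" "SS * C = 1\<^sub>m m"
    using det_ne0_inverse[OF carriers(4) S_det] by blast
  thus ?thesis unfolding invertible_mat_def inverts_mat_def using carriers(4)
    by (intro conjI exI[of _ C]) auto
qed

lemma ok: "PQRS_ok m a b PP QQ RR SS"
  unfolding PQRS_ok_def using carriers S_adj S_inv by auto

lemma Lof_sum: "(\<Sum>j<N. Lof m a X h i j * u j) = Lof m a X (\<lambda>l _. \<Sum>j<N. h l j * u j) i 0"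
proof -
  have "(\<Sum>j<N. (h i j + (\<Sum>l<m. RR $$ (i-m,l) * h l j)) * u j)
      = (\<Sum>j<N. h i j * u j) + (\<Sum>l<m. RR $$ (i-m,l) * (\<Sum>j<N. h l j * u j))"
    by (simp add: distrib_right sum.distrib sum_distrib_left sum_distrib_right mult.assoc
        sum.swap[of _ "{..<N}" "{..<m}"])
  thus ?thesis unfolding Lof_def by (auto simp: sum_negf[symmetric])
qed

lemma Lof_add: "Lof m a X (\<lambda>l j. h1 l j + h2 l j) i j = Lof m a X h1 i j + Lof m a X h2 i j"
  unfolding Lof_def by (auto simp: distrib_left sum.distrib algebra_simps)

lemma core_equiv:
  assumes u: "u \<in> carrier_vec (m+a+b)" and u': "u' \<in> carrier_vec (m+a+b)"
  shows "(B_PQRS m a b PP QQ RR *\<^sub>v u' = A_PQRS m a b PP QQ RR SS *\<^sub>v u) \<longleftrightarrow>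
    (\<forall>i<m+a+b. (\<Sum>j<m+a+b. f i j * u $ j + g i j * u' $ j) = 0)"
proof -
  let ?n = "m+a+b"
  define w where "w = (\<lambda>i. (\<Sum>j<?n. f i j * u $ j + g i j * u' $ j))"
  have Bc: "B_PQRS m a b PP QQ RR \<in> carrier_mat ?n ?n" unfolding B_PQRS_def block3_def by simp
  have Ac: "A_PQRS m a b PP QQ RR SS \<in> carrier_mat ?n ?n" unfolding A_PQRS_def block3_def by simp
  have diff: "(B_PQRS m a b PP QQ RR *\<^sub>v u') $ i - (A_PQRS m a b PP QQ RR SS *\<^sub>v u) $ i = Lof m a X (\<lambda>l _. w l) i 0"
    if i: "i < ?n" for i
  proof -
    have "(B_PQRS m a b PP QQ RR *\<^sub>v u') $ i = (\<Sum>j<?n. Lof m a X g i j * u' $ j)"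
      unfolding mat_vec_index[OF Bc u' i] using i by (intro sum.cong refl) (simp add: core_B)
    also have "\<dots> = Lof m a X (\<lambda>l _. \<Sum>j<?n. g l j * u' $ j) i 0" by (rule Lof_sum)
    finally have 1: "(B_PQRS m a b PP QQ RR *\<^sub>v u') $ i = Lof m a X (\<lambda>l _. \<Sum>j<?n. g l j * u' $ j) i 0" .
    have "(A_PQRS m a b PP QQ RR SS *\<^sub>v u) $ i = - (\<Sum>j<?n. Lof m a X f i j * u $ j)"
      unfolding mat_vec_index[OF Ac u i] sum_negf[symmetric] using i by (intro sum.cong refl) (simp add: core_A)
    also have "\<dots> = - Lof m a X (\<lambda>l _. \<Sum>j<?n. f l j * u $ j) i 0" by (simp add: Lof_sum)
    finally have 2: "(A_PQRS m a b PP QQ RR SS *\<^sub>v u) $ i = - Lof m a X (\<lambda>l _. \<Sum>j<?n. f l j * u $ j) i 0" .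
    have "Lof m a X (\<lambda>l _. w l) i 0 = Lof m a X (\<lambda>l j. (\<Sum>j<?n. f l j * u $ j) + (\<Sum>j<?n. g l j * u' $ j)) i 0"
      unfolding w_def by (simp add: sum.distrib)
    also have "\<dots> = Lof m a X (\<lambda>l _. \<Sum>j<?n. f l j * u $ j) i 0 + Lof m a X (\<lambda>l _. \<Sum>j<?n. g l j * u' $ j) i 0"
      by (rule Lof_add)
    finally show ?thesis using 1 2 by simp
  qed
  have "(B_PQRS m a b PP QQ RR *\<^sub>v u' = A_PQRS m a b PP QQ RR SS *\<^sub>v u) \<longleftrightarrow> (\<forall>i<?n. Lof m a X (\<lambda>l _. w l) i 0 = 0)"
  proof
    assume "B_PQRS m a b PP QQ RR *\<^sub>v u' = A_PQRS m a b PP QQ RR SS *\<^sub>v u"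
    thus "\<forall>i<?n. Lof m a X (\<lambda>l _. w l) i 0 = 0" using diff by simp
  next
    assume "\<forall>i<?n. Lof m a X (\<lambda>l _. w l) i 0 = 0"
    hence "\<forall>i<?n. (B_PQRS m a b PP QQ RR *\<^sub>v u') $ i = (A_PQRS m a b PP QQ RR SS *\<^sub>v u) $ i"
      using diff by (metis eq_iff_diff_eq_0)
    thus "B_PQRS m a b PP QQ RR *\<^sub>v u' = A_PQRS m a b PP QQ RR SS *\<^sub>v u"
      using Bc Ac by (intro eq_vecI) auto
  qed
  also have "\<dots> \<longleftrightarrow> (\<forall>i<?n. w i = 0)"
  proof
    assume L: "\<forall>i<?n. Lof m a X (\<lambda>l _. w l) i 0 = 0"
    have w1: "w i = 0" if "i < m" for i using L that unfolding Lof_def by (metis trans_less_add1 add.assoc)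
    show "\<forall>i<?n. w i = 0"
    proof (intro allI impI)
      fix i assume i: "i < ?n"
      show "w i = 0"
      proof (cases "i < m")
        case True thus ?thesis by (rule w1)
      next
        case F: False
        show ?thesis
        proof (cases "i < m+a")
          case True
          have "(\<Sum>l<m. RR $$ (i-m,l) * w l) = 0" using w1 by simp
          moreover have "Lof m a X (\<lambda>l _. w l) i 0 = 0" using L i by blast
          ultimately show ?thesis using F True unfolding Lof_def by auto
        next
          case False
          have "Lof m a X (\<lambda>l _. w l) i 0 = 0" using L i by blast
          thus ?thesis using F False unfolding Lof_def by auto
        qed
      qed
    qed
  next
    assume "\<forall>i<?n. w i = 0"
    thus "\<forall>i<?n. Lof m a X (\<lambda>l _. w l) i 0 = 0" unfolding Lof_def by auto
  qed
  finally show ?thesis unfolding w_def .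
qed

end


lemma adm_sym:
  assumes adm: "admissible n A B" and i: "i < n" and j: "j < n"
  shows "(\<Sum>l<n. A $$ (i,l) * cnj (B $$ (j,l))) = (\<Sum>l<n. B $$ (i,l) * cnj (A $$ (j,l)))"
proof -
  have A: "A \<in> carrier_mat n n" and B: "B \<in> carrier_mat n n" and sa: "mat_adjoint (A * mat_adjoint B) = A * mat_adjoint B"
    using adm unfolding admissible_def by auto
  define K where "K = A * mat_adjoint B"
  have K: "K \<in> carrier_mat n n" using A B unfolding K_def by auto
  have sa': "mat_adjoint K = K" using sa unfolding K_def .
  have e: "K $$ (x,y) = (\<Sum>l<n. A $$ (x,l) * cnj (B $$ (y,l)))" if "x < n" "y < n" for x y
    unfolding K_def using mat_mult_index[OF A adj_carrier[OF B] that] that B by simp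
  have "(\<Sum>l<n. A $$ (i,l) * cnj (B $$ (j,l))) = mat_adjoint K $$ (i,j)"
    using e[OF i j] sa' by simp
  also have "\<dots> = conjugate (K $$ (j,i))" by (rule adj_index) (use K i j in auto)
  also have "\<dots> = (\<Sum>l<n. B $$ (i,l) * cnj (A $$ (j,l)))" using e[OF j i] by (simp add: mult.commute)
  finally show ?thesis .
qed

lemma N_left_kernel:
  assumes adm: "admissible n A B" and J12: "J12 \<subseteq> {..<n}" and ind: "indep_cols B J12" and sp: "spans_cols B J12"
    and z: "z \<in> carrier_vec n"
    and zN: "\<forall>j<n. (\<Sum>i<n. z $ i * (if j \<in> J12 then B $$ (i,j) else A $$ (i,j))) = 0"
  shows "z = 0\<^sub>v n"
proof -
  have A: "A \<in> carrier_mat n n" and B: "B \<in> carrier_mat n n" using adm unfolding admissible_def by auto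
  have zB12: "(\<Sum>i<n. z $ i * B $$ (i,j)) = 0" if "j \<in> J12" for j using zN that J12 by auto
  have zB: "\<forall>k<n. (\<Sum>i<n. z $ i * B $$ (i,k)) = 0"
  proof (intro allI impI)
    fix k assume k: "k < n"
    from sp[unfolded spans_cols_def] k B obtain c where c: "\<forall>i<n. B $$ (i,k) = (\<Sum>j\<in>J12. c j * B $$ (i,j))" by auto
    have "(\<Sum>i<n. z $ i * B $$ (i,k)) = (\<Sum>i<n. \<Sum>j\<in>J12. c j * (z $ i * B $$ (i,j)))"
      using c by (simp add: sum_distrib_left mult.left_commute)
    also have "\<dots> = (\<Sum>j\<in>J12. c j * (\<Sum>i<n. z $ i * B $$ (i,j)))"
      by (simp add: sum.swap[of _ "{..<n}" J12] sum_distrib_left)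
    also have "\<dots> = 0" using zB12 by simp
    finally show "(\<Sum>i<n. z $ i * B $$ (i,k)) = 0" .
  qed
  define u where "u = (\<lambda>l. (\<Sum>i<n. z $ i * A $$ (i,l)))"
  have u3: "u l = 0" if "l < n" "l \<notin> J12" for l using zN that unfolding u_def by auto
  have ub: "(\<Sum>l<n. u l * cnj (B $$ (j,l))) = 0" if j: "j < n" for j
  proof -
    have "(\<Sum>l<n. u l * cnj (B $$ (j,l))) = (\<Sum>l<n. \<Sum>i<n. z $ i * (A $$ (i,l) * cnj (B $$ (j,l))))"
      unfolding u_def by (simp add: sum_distrib_right mult.assoc)
    also have "\<dots> = (\<Sum>i<n. z $ i * (\<Sum>l<n. A $$ (i,l) * cnj (B $$ (j,l))))"
      by (subst sum.swap) (simp add: sum_distrib_left)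
    also have "\<dots> = (\<Sum>i<n. z $ i * (\<Sum>l<n. B $$ (i,l) * cnj (A $$ (j,l))))"
      using adm_sym[OF adm _ j] by simp
    also have "\<dots> = (\<Sum>i<n. \<Sum>l<n. cnj (A $$ (j,l)) * (z $ i * B $$ (i,l)))"
      by (simp add: sum_distrib_left mult.assoc mult.left_commute mult.commute)
    also have "\<dots> = (\<Sum>l<n. \<Sum>i<n. cnj (A $$ (j,l)) * (z $ i * B $$ (i,l)))"
      by (rule sum.swap)
    also have "\<dots> = (\<Sum>l<n. cnj (A $$ (j,l)) * (\<Sum>i<n. z $ i * B $$ (i,l)))"
      by (simp add: sum_distrib_left)
    also have "\<dots> = 0" using zB by simp
    finally show ?thesis .
  qed
  have u12: "\<forall>l\<in>J12. cnj (u l) = 0"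
  proof -
    have "\<forall>j<dim_row B. (\<Sum>l\<in>J12. cnj (u l) * B $$ (j,l)) = 0"
    proof (intro allI impI)
      fix j assume "j < dim_row B"
      hence j: "j < n" using B by simp
      have "(\<Sum>l\<in>J12. cnj (u l) * B $$ (j,l)) = (\<Sum>l<n. cnj (u l) * B $$ (j,l))"
        by (rule sum.mono_neutral_left) (use J12 u3 in auto)
      also have "\<dots> = cnj (\<Sum>l<n. u l * cnj (B $$ (j,l)))" by (simp add: ac_simps)
      also have "\<dots> = 0" using ub[OF j] by simp
      finally show "(\<Sum>l\<in>J12. cnj (u l) * B $$ (j,l)) = 0" .
    qed
    moreover have "(\<forall>i<dim_row B. (\<Sum>l\<in>J12. cnj (u l) * B $$ (i,l)) = 0) \<longrightarrow> (\<forall>l\<in>J12. cnj (u l) = 0)"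
      using ind unfolding indep_cols_def by (rule spec)
    ultimately show ?thesis by simp
  qed
  have zA: "\<forall>j<n. (\<Sum>i<n. z $ i * A $$ (i,j)) = 0"
  proof (intro allI impI)
    fix j assume j: "j < n"
    show "(\<Sum>i<n. z $ i * A $$ (i,j)) = 0"
    proof (cases "j \<in> J12")
      case True
      hence "cnj (u j) = 0" using u12 by blast
      thus ?thesis unfolding u_def by (simp only: complex_cnj_zero_iff)
    next
      case False thus ?thesis using u3[OF j] unfolding u_def by simp
    qed
  qed
  show ?thesis by (rule adm_left_kernel[OF adm z zA zB])
qed



lemma L_colcomb:
  assumes C: "(C :: complex mat) \<in> carrier_mat n n" and M: "M \<in> carrier_mat n n" and J: "J \<subseteq> {..<n}"
    and x: "x < n" and k: "k < n" and c: "\<forall>l<n. M $$ (l,k) = (\<Sum>j\<in>J. c j * M $$ (l,j))"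
  shows "(C * M) $$ (x,k) = (\<Sum>j\<in>J. c j * (C * M) $$ (x,j))"
proof -
  have "(C * M) $$ (x,k) = (\<Sum>l<n. C $$ (x,l) * M $$ (l,k))" by (rule mat_mult_index[OF C M x k])
  also have "\<dots> = (\<Sum>l<n. \<Sum>j\<in>J. C $$ (x,l) * (c j * M $$ (l,j)))"
    using c by (simp add: sum_distrib_left)
  also have "\<dots> = (\<Sum>l<n. \<Sum>j\<in>J. c j * (C $$ (x,l) * M $$ (l,j)))"
    by (intro sum.cong refl) (rule mult.left_commute)
  also have "\<dots> = (\<Sum>j\<in>J. \<Sum>l<n. c j * (C $$ (x,l) * M $$ (l,j)))" by (rule sum.swap)
  also have "\<dots> = (\<Sum>j\<in>J. c j * (C * M) $$ (x,j))"
  proof (intro sum.cong refl)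
    fix j assume "j \<in> J"
    hence j: "j < n" using J by auto
    show "(\<Sum>l<n. c j * (C $$ (x,l) * M $$ (l,j))) = c j * (C * M) $$ (x,j)"
      unfolding mat_mult_index[OF C M x j] by (simp add: sum_distrib_left)
  qed
  finally show ?thesis .
qed

lemma L_herm:
  assumes A: "(A :: complex mat) \<in> carrier_mat n n" and B: "B \<in> carrier_mat n n" and C: "C \<in> carrier_mat n n"
    and sa: "mat_adjoint (A * mat_adjoint B) = A * mat_adjoint B"
  shows "mat_adjoint ((C * A) * mat_adjoint (C * B)) = (C * A) * mat_adjoint (C * B)"
proof -
  have aB: "mat_adjoint B \<in> carrier_mat n n" and aC: "mat_adjoint C \<in> carrier_mat n n" using B C by auto
  define K where "K = A * mat_adjoint B"
  have K: "K \<in> carrier_mat n n" using A aB unfolding K_def by auto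
  have sa': "mat_adjoint K = K" using sa unfolding K_def .
  have CK: "C * K \<in> carrier_mat n n" using C K by auto
  have X: "mat_adjoint B * mat_adjoint C \<in> carrier_mat n n" using aB aC by auto
  have e1: "mat_adjoint (C * B) = mat_adjoint B * mat_adjoint C" by (rule adj_mult[OF C B])
  have e2: "C * A * (mat_adjoint B * mat_adjoint C) = C * (A * (mat_adjoint B * mat_adjoint C))"
    by (rule assoc_mult_mat[OF C A X])
  have e3: "A * mat_adjoint B * mat_adjoint C = A * (mat_adjoint B * mat_adjoint C)"
    by (rule assoc_mult_mat[OF A aB aC])
  have e4: "C * K * mat_adjoint C = C * (K * mat_adjoint C)" by (rule assoc_mult_mat[OF C K aC])
  have e: "(C * A) * mat_adjoint (C * B) = C * K * mat_adjoint C"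
  proof -
    have "(C * A) * mat_adjoint (C * B) = C * A * (mat_adjoint B * mat_adjoint C)" by (simp only: e1)
    also have "\<dots> = C * (A * (mat_adjoint B * mat_adjoint C))" by (rule e2)
    also have "\<dots> = C * (K * mat_adjoint C)" unfolding K_def e3 ..
    also have "\<dots> = C * K * mat_adjoint C" by (rule e4[symmetric])
    finally show ?thesis .
  qed
  have f1: "mat_adjoint (C * K * mat_adjoint C) = mat_adjoint (mat_adjoint C) * mat_adjoint (C * K)"
    by (rule adj_mult[OF CK aC])
  have f2: "mat_adjoint (C * K) = mat_adjoint K * mat_adjoint C" by (rule adj_mult[OF C K])
  have "mat_adjoint (C * K * mat_adjoint C) = C * (K * mat_adjoint C)"
    unfolding f1 f2 sa' adj_adj ..
  also have "\<dots> = C * K * mat_adjoint C" unfolding e4 ..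
  finally show ?thesis unfolding e .
qed



lemma existence_setup:
  assumes adm: "admissible n A B"
  defines "rA \<equiv> vec_space.rank n A" and "rB \<equiv> vec_space.rank n B"
  shows "\<exists>J1 J2 J3 C. rA + rB \<ge> n \<and> rA \<le> n \<and> rB \<le> n \<and>
     J1 \<union> J2 \<union> J3 = {..<n} \<and> J1 \<inter> J2 = {} \<and> J1 \<inter> J3 = {} \<and> J2 \<inter> J3 = {} \<and>
     card J1 = rA + rB - n \<and> card J2 = n - rA \<and> card J3 = n - rB \<and>
     C \<in> carrier_mat n n \<and> (\<forall>v\<in>carrier_vec n. C *\<^sub>v v = 0\<^sub>v n \<longrightarrow> v = 0\<^sub>v n) \<and>
     (\<forall>x<n. \<forall>k\<in>J1 \<union> J2. (C * B) $$ (x,k) = (if x = k then 1 else 0)) \<and>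
     (\<forall>x<n. \<forall>k\<in>J3. (C * A) $$ (x,k) = (if x = k then 1 else 0)) \<and>
     spans_cols B (J1 \<union> J2) \<and> indep_cols A (J1 \<union> J3) \<and> spans_cols A (J1 \<union> J3)"
proof -
  have A: "A \<in> carrier_mat n n" and B: "B \<in> carrier_mat n n" using adm unfolding admissible_def by auto
  have "indep_cols B {}" unfolding indep_cols_def by simp
  from vec_space.cols_basis[OF B _ this] obtain J12 where
    J12: "J12 \<subseteq> {..<n}" "card J12 = rB" "indep_cols B J12" "spans_cols B J12" unfolding rB_def by auto
  define J3 where "J3 = {..<n} - J12"
  have cJ3: "card J3 = n - rB" unfolding J3_def using J12 by (simp add: card_Diff_subset finite_subset)
  have rBn: "rB \<le> n" using card_mono[OF _ J12(1)] J12(2) by simp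
  define N where "N = mat n n (\<lambda>(i,j). if j \<in> J12 then B $$ (i,j) else A $$ (i,j))"
  have N: "N \<in> carrier_mat n n" unfolding N_def by simp
  have NT: "transpose_mat N \<in> carrier_mat n n" using N by simp
  have "det (transpose_mat N) \<noteq> 0"
  proof (rule det_ne0_cols[OF NT], intro ballI impI)
    fix z :: "complex vec" assume z: "z \<in> carrier_vec n" and eq: "transpose_mat N *\<^sub>v z = 0\<^sub>v n"
    have "\<forall>j<n. (\<Sum>i<n. z $ i * (if j \<in> J12 then B $$ (i,j) else A $$ (i,j))) = 0"
    proof (intro allI impI)
      fix j assume j: "j < n"
      have "(\<Sum>i<n. z $ i * (if j \<in> J12 then B $$ (i,j) else A $$ (i,j))) = (transpose_mat N *\<^sub>v z) $ j"
        unfolding mat_vec_index[OF NT z j] unfolding N_def using j by (intro sum.cong refl) auto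
      thus "(\<Sum>i<n. z $ i * (if j \<in> J12 then B $$ (i,j) else A $$ (i,j))) = 0" using eq j by simp
    qed
    thus "z = 0\<^sub>v n" by (rule N_left_kernel[OF adm J12(1) J12(3) J12(4) z])
  qed
  hence dN: "det N \<noteq> 0" using det_transpose[OF N] by simp
  obtain C where C: "C \<in> carrier_mat n n" "C * N = 1\<^sub>m n" "N * C = 1\<^sub>m n" using det_ne0_inverse[OF N dN] by blast
  have Cinj: "\<forall>v\<in>carrier_vec n. C *\<^sub>v v = 0\<^sub>v n \<longrightarrow> v = 0\<^sub>v n"
  proof (intro ballI impI)
    fix v :: "complex vec" assume v: "v \<in> carrier_vec n" and Cv: "C *\<^sub>v v = 0\<^sub>v n"
    have "v = (N * C) *\<^sub>v v" using C(3) v by simp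
    also have "\<dots> = N *\<^sub>v (C *\<^sub>v v)" by (rule assoc_mult_mat_vec[OF N C(1) v])
    also have "\<dots> = 0\<^sub>v n" unfolding Cv
      by (rule eq_vecI) (use N in \<open>auto simp: mat_vec_index\<close>)
    finally show "v = 0\<^sub>v n" .
  qed
  have indA3: "indep_cols A J3"
    unfolding indep_cols_def
  proof (intro allI impI ballI)
    fix c j assume eq: "\<forall>i<dim_row A. (\<Sum>j\<in>J3. c j * A $$ (i,j)) = 0" and j: "j \<in> J3"
    define v where "v = vec n (\<lambda>j. if j \<in> J3 then c j else 0)"
    have v: "v \<in> carrier_vec n" unfolding v_def by simp
    have "N *\<^sub>v v = 0\<^sub>v n"
    proof (rule eq_vecI)
      fix i assume "i < dim_vec (0\<^sub>v n)"
      hence i: "i < n" by simp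
      have "(N *\<^sub>v v) $ i = (\<Sum>j<n. if j \<in> J3 then c j * A $$ (i,j) else 0)"
        unfolding mat_vec_index[OF N v i] unfolding N_def v_def using i by (intro sum.cong refl) (auto simp: J3_def)
      also have "\<dots> = (\<Sum>j\<in>J3. c j * A $$ (i,j))"
        by (simp add: sum.inter_filter[symmetric]) (rule sum.cong, auto simp: J3_def)
      also have "\<dots> = 0" using eq i A by simp
      finally show "(N *\<^sub>v v) $ i = 0\<^sub>v n $ i" using i by simp
    qed (use N in simp)
    hence "v = 0\<^sub>v n" using det_ne0_inj[OF N dN v] by simp
    hence "v $ j = 0" using j unfolding J3_def by simp
    thus "c j = 0" using j unfolding v_def J3_def by auto
  qed
  have J3sub: "J3 \<subseteq> {..<n}" unfolding J3_def by auto
  from vec_space.cols_basis[OF A J3sub indA3] obtain J' where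
    J': "J3 \<subseteq> J'" "J' \<subseteq> {..<n}" "card J' = rA" "indep_cols A J'" "spans_cols A J'" unfolding rA_def by auto
  have rAn: "rA \<le> n" using card_mono[OF _ J'(2)] J'(3) by simp
  have ge: "n - rB \<le> rA" using card_mono[OF _ J'(1)] J'(3) cJ3 J'(2) finite_subset by fastforce
  define J1 where "J1 = J' - J3"
  define J2 where "J2 = J12 - J1"
  have finJ': "finite J'" using J'(2) finite_subset by blast
  have cJ1: "card J1 = rA + rB - n" unfolding J1_def using card_Diff_subset[OF _ J'(1)] J'(3) cJ3 finJ' finite_subset[OF J'(1)]
    rBn ge by simp
  have J1sub: "J1 \<subseteq> J12" unfolding J1_def J3_def using J'(2) by auto
  have cJ2: "card J2 = n - rA" unfolding J2_def using card_Diff_subset[OF _ J1sub] cJ1 J12(2) finite_subset[OF J1sub]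
    finite_subset[OF J12(1)] rBn rAn ge by simp
  have U: "J1 \<union> J2 \<union> J3 = {..<n}" unfolding J1_def J2_def J3_def using J'(2) J12(1) by auto
  have J12eq: "J1 \<union> J2 = J12" unfolding J2_def using J1sub by auto
  have J'eq: "J1 \<union> J3 = J'" unfolding J1_def using J'(1) by auto
  have CB: "\<forall>x<n. \<forall>k\<in>J1 \<union> J2. (C * B) $$ (x,k) = (if x = k then 1 else 0)"
  proof (intro allI impI ballI)
    fix x k assume x: "x < n" and k: "k \<in> J1 \<union> J2"
    hence k12: "k \<in> J12" and kn: "k < n" using J12eq J12(1) by auto
    have "(C * B) $$ (x,k) = (\<Sum>l<n. C $$ (x,l) * B $$ (l,k))" by (rule mat_mult_index[OF C(1) B x kn])
    also have "\<dots> = (C * N) $$ (x,k)" unfolding mat_mult_index[OF C(1) N x kn] unfolding N_def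
      using k12 kn by (intro sum.cong refl) auto
    finally show "(C * B) $$ (x,k) = (if x = k then 1 else 0)" using C(2) x kn by simp
  qed
  have CA: "\<forall>x<n. \<forall>k\<in>J3. (C * A) $$ (x,k) = (if x = k then 1 else 0)"
  proof (intro allI impI ballI)
    fix x k assume x: "x < n" and k: "k \<in> J3"
    hence k3: "k \<notin> J12" and kn: "k < n" unfolding J3_def by auto
    have "(C * A) $$ (x,k) = (\<Sum>l<n. C $$ (x,l) * A $$ (l,k))" by (rule mat_mult_index[OF C(1) A x kn])
    also have "\<dots> = (C * N) $$ (x,k)" unfolding mat_mult_index[OF C(1) N x kn] unfolding N_def
      using k3 kn by (intro sum.cong refl) auto
    finally show "(C * A) $$ (x,k) = (if x = k then 1 else 0)" using C(2) x kn by simp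
  qed
  have disj: "J1 \<inter> J2 = {}" "J1 \<inter> J3 = {}" "J2 \<inter> J3 = {}" unfolding J1_def J2_def J3_def by auto
  show ?thesis
    apply (rule exI[of _ J1], rule exI[of _ J2], rule exI[of _ J3], rule exI[of _ C])
    using ge rAn rBn U disj cJ1 cJ2 cJ3 C(1) Cinj CB CA J12(4) J'(4,5) unfolding J12eq J'eq by auto
qed



lemma L_Cw:
  assumes C: "(C :: complex mat) \<in> carrier_mat n n" and A: "A \<in> carrier_mat n n" and J: "J \<subseteq> {..<n}" and y: "y < n"
  shows "(C *\<^sub>v vec n (\<lambda>l. \<Sum>x\<in>J. c x * A $$ (l,x))) $ y = (\<Sum>x\<in>J. c x * (C * A) $$ (y,x))"
proof -
  have w: "vec n (\<lambda>l. \<Sum>x\<in>J. c x * A $$ (l,x)) \<in> carrier_vec n" by simp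
  have "(C *\<^sub>v vec n (\<lambda>l. \<Sum>x\<in>J. c x * A $$ (l,x))) $ y = (\<Sum>l<n. C $$ (y,l) * (\<Sum>x\<in>J. c x * A $$ (l,x)))"
    unfolding mat_vec_index[OF C w y] by (intro sum.cong refl) simp
  also have "\<dots> = (\<Sum>l<n. \<Sum>x\<in>J. c x * (C $$ (y,l) * A $$ (l,x)))"
    by (simp add: sum_distrib_left mult.left_commute)
  also have "\<dots> = (\<Sum>x\<in>J. \<Sum>l<n. c x * (C $$ (y,l) * A $$ (l,x)))" by (rule sum.swap)
  also have "\<dots> = (\<Sum>x\<in>J. c x * (C * A) $$ (y,x))"
  proof (intro sum.cong refl)
    fix x assume "x \<in> J"
    hence x: "x < n" using J by auto
    show "(\<Sum>l<n. c x * (C $$ (y,l) * A $$ (l,x))) = c x * (C * A) $$ (y,x)"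
      unfolding mat_mult_index[OF C A y x] by (simp add: sum_distrib_left)
  qed
  finally show ?thesis .
qed


lemma existence:
  assumes adm: "admissible n A B"
  defines "rA \<equiv> vec_space.rank n A" and "rB \<equiv> vec_space.rank n B"
  defines "m \<equiv> rA + rB - n" and "a \<equiv> n - rA" and "b \<equiv> n - rB"
  shows "rA + rB \<ge> n \<and> (\<exists>p. p permutes {..<n} \<and>
     (\<exists>P Q R S. PQRS_ok m a b P Q R S \<and> PQRS_equiv n A B p m a b P Q R S))"
proof -
  have A: "A \<in> carrier_mat n n" and B: "B \<in> carrier_mat n n" using adm unfolding admissible_def by auto
  obtain J1 J2 J3 C where ge: "rA + rB \<ge> n" and rAn: "rA \<le> n" and rBn: "rB \<le> n"
    and U: "J1 \<union> J2 \<union> J3 = {..<n}" and disj: "J1 \<inter> J2 = {}" "J1 \<inter> J3 = {}" "J2 \<inter> J3 = {}"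
    and cJ: "card J1 = m" "card J2 = a" "card J3 = b"
    and C: "C \<in> carrier_mat n n" and Cinj: "\<forall>v\<in>carrier_vec n. C *\<^sub>v v = 0\<^sub>v n \<longrightarrow> v = 0\<^sub>v n"
    and CB: "\<forall>x<n. \<forall>k\<in>J1 \<union> J2. (C * B) $$ (x,k) = (if x = k then 1 else 0)"
    and CA: "\<forall>x<n. \<forall>k\<in>J3. (C * A) $$ (x,k) = (if x = k then 1 else 0)"
    and spB: "spans_cols B (J1 \<union> J2)" and indA: "indep_cols A (J1 \<union> J3)" and spA: "spans_cols A (J1 \<union> J3)"
    using existence_setup[OF adm] unfolding rA_def[symmetric] rB_def[symmetric] m_def[symmetric] a_def[symmetric] b_def[symmetric]
    by blast
  have nsum: "n = m + a + b" unfolding m_def a_def b_def using ge rAn rBn by simp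
  have Jsub: "J1 \<subseteq> {..<n}" "J2 \<subseteq> {..<n}" "J3 \<subseteq> {..<n}" using U by auto
  have fin: "finite J1" "finite J2" "finite J3"
    using finite_subset[OF Jsub(1)] finite_subset[OF Jsub(2)] finite_subset[OF Jsub(3)] by auto
  obtain h1 where h1: "bij_betw h1 {..<m} J1" using ex_bij_betw_nat_finite[OF fin(1)] cJ(1) by (auto simp: atLeast0LessThan)
  obtain h2 where h2: "bij_betw h2 {..<a} J2" using ex_bij_betw_nat_finite[OF fin(2)] cJ(2) by (auto simp: atLeast0LessThan)
  obtain h3 where h3: "bij_betw h3 {..<b} J3" using ex_bij_betw_nat_finite[OF fin(3)] cJ(3) by (auto simp: atLeast0LessThan)
  define p where "p = (\<lambda>i. if i < m then h1 i else if i < m+a then h2 (i-m) else if i < n then h3 (i-m-a) else i)"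
  have pJ1: "p i \<in> J1" if "i < m" for i using that h1 unfolding p_def bij_betw_def by auto
  have pJ2: "p i \<in> J2" if "m \<le> i" "i < m+a" for i using that h2 unfolding p_def bij_betw_def by auto
  have pJ3: "p i \<in> J3" if "m+a \<le> i" "i < n" for i using that h3 nsum unfolding p_def bij_betw_def by auto
  have p3: "p (m+a+l) = h3 l" if "l < b" for l using that nsum unfolding p_def by auto
  have pn: "p i < n" if "i < n" for i
  proof -
    have "i < m \<or> (m \<le> i \<and> i < m+a) \<or> (m+a \<le> i \<and> i < n)" using that by auto
    thus ?thesis using pJ1 pJ2 pJ3 Jsub by blast
  qed
  have pinj: "inj_on p {..<n}"
  proof (rule inj_onI)
    fix i j assume i: "i \<in> {..<n}" and j: "j \<in> {..<n}" and eq: "p i = p j"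
    have i3: "i < m \<or> (m \<le> i \<and> i < m+a) \<or> (m+a \<le> i \<and> i < n)" using i by auto
    have j3: "j < m \<or> (m \<le> j \<and> j < m+a) \<or> (m+a \<le> j \<and> j < n)" using j by auto
    have ij: "inj_on h1 {..<m}" "inj_on h2 {..<a}" "inj_on h3 {..<b}" using h1 h2 h3 by (auto simp: bij_betw_def)
    show "i = j"
    proof -
      { assume "i < m" "j < m"
        hence ?thesis using eq ij(1) unfolding p_def by (auto dest: inj_onD) }
      moreover
      { assume a1: "m \<le> i" "i < m+a" "m \<le> j" "j < m+a"
        hence "h2 (i-m) = h2 (j-m)" using eq unfolding p_def by auto
        hence "i - m = j - m" using ij(2) a1 by (auto dest: inj_onD)
        hence ?thesis using a1 by simp }
      moreover
      { assume a1: "m+a \<le> i" "i < n" "m+a \<le> j" "j < n"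
        hence "h3 (i-m-a) = h3 (j-m-a)" using eq unfolding p_def by auto
        hence "i - m - a = j - m - a" using ij(3) a1 nsum by (auto dest: inj_onD)
        hence ?thesis using a1 by simp }
      moreover
      { fix x y assume "x \<in> J1" "y \<in> J2" hence "x \<noteq> y" using disj by auto }
      moreover
      { fix x y assume "x \<in> J1" "y \<in> J3" hence "x \<noteq> y" using disj by auto }
      moreover
      { fix x y assume "x \<in> J2" "y \<in> J3" hence "x \<noteq> y" using disj by auto }
      ultimately show ?thesis using i3 j3 pJ1 pJ2 pJ3 eq by metis
    qed
  qed
  have pimg: "p ` {..<n} = {..<n}" by (rule endo_inj_surj) (use pn pinj in auto)
  have pbij: "bij_betw p {..<n} {..<n}" using pinj pimg unfolding bij_betw_def by auto
  have pperm: "p permutes {..<n}"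
    by (rule bij_imp_permutes[OF pbij]) (auto simp: p_def nsum)
  have p1: "p l = h1 l" if "l < m" for l using that unfolding p_def by auto
  define F where "F = C * A"
  define G where "G = C * B"
  have F: "F \<in> carrier_mat n n" and G: "G \<in> carrier_mat n n" unfolding F_def G_def using C A B by auto
  define f where "f = (\<lambda>i j. F $$ (p i, p j))"
  define g where "g = (\<lambda>i j. G $$ (p i, p j))"
  have peq: "(p i = p j) = (i = j)" if "i < n" "j < n" for i j using pinj that by (auto dest: inj_onD)
  have G0: "G $$ (x,k) = 0" if x: "x \<in> J3" and k: "k < n" for x k
  proof -
    from spB[unfolded spans_cols_def] k B obtain c where c: "\<forall>l<n. B $$ (l,k) = (\<Sum>j\<in>J1 \<union> J2. c j * B $$ (l,j))"
      by auto
    have xn: "x < n" using x Jsub by auto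
    have "G $$ (x,k) = (\<Sum>j\<in>J1 \<union> J2. c j * G $$ (x,j))"
      unfolding G_def by (rule L_colcomb[OF C B _ xn k c]) (use Jsub in auto)
    also have "\<dots> = 0" using CB xn x disj unfolding G_def by (intro sum.neutral) auto
    finally show ?thesis .
  qed
  have g1: "g i j = (if i = j then 1 else 0)" if "i < m+a+b" "j < m+a" for i j
  proof -
    have "p j \<in> J1 \<union> J2" using that pJ1 pJ2 by (cases "j < m") auto
    thus ?thesis unfolding g_def G_def using CB pn peq that nsum by auto
  qed
  have g2: "g i j = 0" if "m+a \<le> i" "i < m+a+b" "j < m+a+b" for i j
    unfolding g_def using G0 pJ3 pn that nsum by auto
  have f1: "f i j = (if i = j then 1 else 0)" if "i < m+a+b" "m+a \<le> j" "j < m+a+b" for i j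
    unfolding f_def F_def using CA pJ3 pn peq that nsum by auto
  define MM where "MM = F * mat_adjoint G"
  have MMc: "MM \<in> carrier_mat n n" unfolding MM_def using F G by auto
  have MMsa: "mat_adjoint MM = MM" unfolding MM_def F_def G_def
    by (rule L_herm[OF A B C]) (use adm in \<open>auto simp: admissible_def\<close>)
  have MMe: "MM $$ (x,y) = (\<Sum>k<n. F $$ (x,k) * cnj (G $$ (y,k)))" if "x < n" "y < n" for x y
    unfolding MM_def using mat_mult_index[OF F adj_carrier[OF G] that] that G by simp
  have MMs: "MM $$ (x,y) = cnj (MM $$ (y,x))" if "x < n" "y < n" for x y
  proof -
    have "MM $$ (x,y) = mat_adjoint MM $$ (x,y)" using MMsa by simp
    also have "\<dots> = conjugate (MM $$ (y,x))" by (rule adj_index) (use MMc that in auto)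
    finally show ?thesis by simp
  qed
  have Mp: "MM $$ (p i, p j) = (\<Sum>k<n. f i k * cnj (g j k))" if "i < n" "j < n" for i j
  proof -
    have "MM $$ (p i, p j) = (\<Sum>k<n. F $$ (p i,k) * cnj (G $$ (p j,k)))" using MMe pn that by simp
    also have "\<dots> = (\<Sum>k<n. F $$ (p i,p k) * cnj (G $$ (p j,p k)))"
      using sum.reindex_bij_betw[OF pbij, of "\<lambda>k. F $$ (p i,k) * cnj (G $$ (p j,k))"] by simp
    finally show ?thesis unfolding f_def g_def .
  qed
  have split: "(\<Sum>k<n. f i k * cnj (g j k)) = f i j + (\<Sum>k<b. f i (m+a+k) * cnj (g j (m+a+k)))"
    if i: "i < n" and j: "j < m+a" for i j
  proof -
    have "(\<Sum>k<n. f i k * cnj (g j k)) = (\<Sum>k<m+a. f i k * cnj (g j k)) + (\<Sum>k<b. f i (m+a+k) * cnj (g j (m+a+k)))"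
      unfolding nsum by (rule sum_lessThan_add)
    moreover have "(\<Sum>k<m+a. f i k * cnj (g j k)) = (\<Sum>k<m+a. f i k * (if j = k then 1 else 0))"
      using j nsum by (intro sum.cong refl) (simp add: g1)
    moreover have "\<dots> = f i j" using j by (simp add: sum_delta_mult')
    ultimately show ?thesis by simp
  qed
  have fs1: "f i j = cnj (f j i)" if "i < m+a" "j < m+a" for i j
  proof -
    have z: "(\<Sum>k<b. f x (m+a+k) * cnj (g y (m+a+k))) = 0" if "x < m+a" for x y
      using that nsum by (intro sum.neutral) (auto simp: f1)
    have pin: "p i < n" "p j < n" using pn that nsum by auto
    have "f i j = MM $$ (p i, p j)" using Mp split z that nsum by simp
    also have "\<dots> = cnj (MM $$ (p j, p i))" by (rule MMs[OF pin])
    also have "MM $$ (p j, p i) = f j i" using Mp split z that nsum by simp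
    finally show ?thesis .
  qed
  have fs2: "f i j = - cnj (g j i)" if i: "m+a \<le> i" "i < m+a+b" and j: "j < m+a" for i j
  proof -
    obtain k0 where k0: "i = m+a+k0" "k0 < b" using i by (metis add_diff_inverse_nat add_less_cancel_left not_less)
    have "(\<Sum>k<b. f i (m+a+k) * cnj (g j (m+a+k))) = (\<Sum>k<b. cnj (g j (m+a+k)) * (if k0 = k then 1 else 0))"
      using i k0 by (intro sum.cong refl) (auto simp: f1)
    also have "\<dots> = cnj (g j i)" using k0 by (simp add: sum_delta_mult')
    finally have e1: "MM $$ (p i, p j) = f i j + cnj (g j i)" using Mp split i j nsum by simp
    have "MM $$ (p j, p i) = 0" using Mp[of j i] i j nsum by (simp add: g2)
    moreover have "MM $$ (p i, p j) = cnj (MM $$ (p j, p i))" by (rule MMs) (use pn i j nsum in auto)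
    ultimately have "MM $$ (p i, p j) = 0" by simp
    thus ?thesis using e1 by (simp add: add_eq_0_iff)
  qed
  have "\<forall>k. \<exists>c. k < n \<longrightarrow> (\<forall>l<n. A $$ (l,k) = (\<Sum>x\<in>J1 \<union> J3. c x * A $$ (l,x)))"
    using spA A unfolding spans_cols_def by auto
  then obtain cf where cf: "\<And>k. k < n \<Longrightarrow> \<forall>l<n. A $$ (l,k) = (\<Sum>x\<in>J1 \<union> J3. cf k x * A $$ (l,x))"
    by metis
  have reidx: "(\<Sum>x\<in>J1 \<union> J3. \<phi> x) = (\<Sum>l<m. \<phi> (p l)) + (\<Sum>l<b. \<phi> (p (m+a+l)))" for \<phi> :: "nat \<Rightarrow> complex"
  proof -
    have "(\<Sum>x\<in>J1 \<union> J3. \<phi> x) = (\<Sum>x\<in>J1. \<phi> x) + (\<Sum>x\<in>J3. \<phi> x)"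
      by (rule sum.union_disjoint) (use fin disj in auto)
    also have "(\<Sum>x\<in>J1. \<phi> x) = (\<Sum>l<m. \<phi> (h1 l))" using sum.reindex_bij_betw[OF h1, of \<phi>] by simp
    also have "\<dots> = (\<Sum>l<m. \<phi> (p l))" using p1 by simp
    also have "(\<Sum>x\<in>J3. \<phi> x) = (\<Sum>l<b. \<phi> (h3 l))" using sum.reindex_bij_betw[OF h3, of \<phi>] by simp
    also have "\<dots> = (\<Sum>l<b. \<phi> (p (m+a+l)))" using p3 by simp
    finally show ?thesis .
  qed
  define X where "X = (\<lambda>l j. cf (p j) (p l))"
  define Y where "Y = (\<lambda>l j. cf (p j) (p (m+a+l)))"
  have fx: "f i j = (\<Sum>l<m. X l j * f i l) + (\<Sum>l<b. Y l j * f i (m+a+l))"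
    if j: "m \<le> j" "j < m+a" and i: "i < m+a+b" for i j
  proof -
    have pjn: "p j < n" "p i < n" using pn j i nsum by auto
    have "F $$ (p i, p j) = (\<Sum>x\<in>J1 \<union> J3. cf (p j) x * F $$ (p i, x))"
      unfolding F_def by (rule L_colcomb[OF C A _ pjn(2) pjn(1) cf[OF pjn(1)]]) (use Jsub in auto)
    thus ?thesis unfolding reidx f_def X_def Y_def .
  qed
  have indF: "\<forall>l<m. V l = 0"
    if V: "\<forall>i<m+a+b. (\<Sum>l<m. V l * f i l) + (\<Sum>l<b. V (m+a+l) * f i (m+a+l)) = 0" for V
  proof -
    define c where "c = (\<lambda>x. V (inv_into {..<n} p x))"
    have cp: "c (p l) = V l" if "l < n" for l unfolding c_def using pinj that by (simp add: inv_into_f_f)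
    have zF: "(\<Sum>x\<in>J1 \<union> J3. c x * F $$ (y,x)) = 0" if y: "y < n" for y
    proof -
      obtain i where i: "i < n" "y = p i" using y pimg by (metis imageE lessThan_iff)
      have "(\<Sum>x\<in>J1 \<union> J3. c x * F $$ (y,x)) = (\<Sum>l<m. V l * f i l) + (\<Sum>l<b. V (m+a+l) * f i (m+a+l))"
        unfolding reidx f_def i(2) using cp nsum by simp
      thus ?thesis using V i nsum by simp
    qed
    define w where "w = vec n (\<lambda>l. \<Sum>x\<in>J1 \<union> J3. c x * A $$ (l,x))"
    have w: "w \<in> carrier_vec n" unfolding w_def by simp
    have "C *\<^sub>v w = 0\<^sub>v n"
    proof (rule eq_vecI)
      fix y assume "y < dim_vec (0\<^sub>v n)"
      hence y: "y < n" by simp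
      have "(C *\<^sub>v w) $ y = (\<Sum>x\<in>J1 \<union> J3. c x * F $$ (y,x))" unfolding w_def F_def
        by (rule L_Cw[OF C A _ y]) (use Jsub in auto)
      thus "(C *\<^sub>v w) $ y = 0\<^sub>v n $ y" using zF y by simp
    qed (use C in simp)
    hence w0: "w = 0\<^sub>v n" using Cinj w by simp
    have "\<forall>i<dim_row A. (\<Sum>x\<in>J1 \<union> J3. c x * A $$ (i,x)) = 0"
    proof (intro allI impI)
      fix i assume "i < dim_row A"
      hence i: "i < n" using A by simp
      have "w $ i = 0" using w0 i by simp
      thus "(\<Sum>x\<in>J1 \<union> J3. c x * A $$ (i,x)) = 0" unfolding w_def using i by simp
    qed
    moreover have "(\<forall>i<dim_row A. (\<Sum>x\<in>J1 \<union> J3. c x * A $$ (i,x)) = 0) \<longrightarrow> (\<forall>x\<in>J1 \<union> J3. c x = 0)"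
      using indA unfolding indep_cols_def by (rule spec)
    ultimately have c0: "\<forall>x\<in>J1 \<union> J3. c x = 0" by blast
    show ?thesis
    proof (intro allI impI)
      fix l assume l: "l < m"
      have "V l = c (p l)" using cp l nsum by simp
      thus "V l = 0" using c0 pJ1[OF l] by simp
    qed
  qed
  interpret core m a b f g X Y
    apply unfold_locales
    subgoal by (fact g1)
    subgoal by (fact g2)
    subgoal by (fact f1)
    subgoal by (fact fs1)
    subgoal by (fact fs2)
    subgoal by (fact fx)
    subgoal by (fact indF)
    done
  have equiv: "PQRS_equiv n A B p m a b PP QQ RR SS"
    unfolding PQRS_equiv_def
  proof (intro ballI)
    fix \<Psi> \<Psi>' :: "complex vec" assume \<Psi>: "\<Psi> \<in> carrier_vec n" and \<Psi>': "\<Psi>' \<in> carrier_vec n"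
    define u where "u = perm_vec p \<Psi>"
    define u' where "u' = perm_vec p \<Psi>'"
    have u: "u \<in> carrier_vec (m+a+b)" and u': "u' \<in> carrier_vec (m+a+b)"
      using \<Psi> \<Psi>' nsum unfolding u_def u'_def perm_vec_def by auto
    have ui: "u $ j = \<Psi> $ p j" "u' $ j = \<Psi>' $ p j" if "j < n" for j
      using that \<Psi> \<Psi>' unfolding u_def u'_def perm_vec_def by auto
    have AB: "A *\<^sub>v \<Psi> + B *\<^sub>v \<Psi>' \<in> carrier_vec n" using A B \<Psi> \<Psi>' by auto
    define E where "E = C *\<^sub>v (A *\<^sub>v \<Psi> + B *\<^sub>v \<Psi>')"
    have E: "E = F *\<^sub>v \<Psi> + G *\<^sub>v \<Psi>'"
    proof -
      have "E = C *\<^sub>v (A *\<^sub>v \<Psi>) + C *\<^sub>v (B *\<^sub>v \<Psi>')" unfolding E_def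
        by (rule mult_add_distrib_mat_vec[OF C]) (use A B \<Psi> \<Psi>' in auto)
      also have "\<dots> = F *\<^sub>v \<Psi> + G *\<^sub>v \<Psi>'" unfolding F_def G_def
        using assoc_mult_mat_vec[OF C A \<Psi>] assoc_mult_mat_vec[OF C B \<Psi>'] by simp
      finally show ?thesis .
    qed
    have Ei: "E $ y = (\<Sum>k<n. F $$ (y,k) * \<Psi> $ k + G $$ (y,k) * \<Psi>' $ k)" if y: "y < n" for y
      unfolding E using mat_vec_index[OF F \<Psi> y] mat_vec_index[OF G \<Psi>' y] F G y by (simp add: sum.distrib)
    have Epi: "E $ (p i) = (\<Sum>j<m+a+b. f i j * u $ j + g i j * u' $ j)" if i: "i < n" for i
    proof -
      have "E $ (p i) = (\<Sum>k<n. F $$ (p i,k) * \<Psi> $ k + G $$ (p i,k) * \<Psi>' $ k)" using Ei pn i by simp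
      also have "\<dots> = (\<Sum>j<n. F $$ (p i,p j) * \<Psi> $ p j + G $$ (p i,p j) * \<Psi>' $ p j)"
        using sum.reindex_bij_betw[OF pbij, of "\<lambda>k. F $$ (p i,k) * \<Psi> $ k + G $$ (p i,k) * \<Psi>' $ k"] by simp
      also have "\<dots> = (\<Sum>j<m+a+b. f i j * u $ j + g i j * u' $ j)"
        unfolding f_def g_def nsum[symmetric] using ui by (intro sum.cong refl) auto
      finally show ?thesis .
    qed
    have "(A *\<^sub>v \<Psi> + B *\<^sub>v \<Psi>' = 0\<^sub>v n) \<longleftrightarrow> E = 0\<^sub>v n"
    proof
      assume "A *\<^sub>v \<Psi> + B *\<^sub>v \<Psi>' = 0\<^sub>v n"
      thus "E = 0\<^sub>v n" unfolding E_def by (intro eq_vecI) (use C in \<open>auto simp: mat_vec_index\<close>)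
    next
      assume "E = 0\<^sub>v n"
      thus "A *\<^sub>v \<Psi> + B *\<^sub>v \<Psi>' = 0\<^sub>v n" using Cinj AB unfolding E_def by simp
    qed
    also have "\<dots> \<longleftrightarrow> (\<forall>i<n. E $ (p i) = 0)"
    proof
      assume "E = 0\<^sub>v n" thus "\<forall>i<n. E $ (p i) = 0" using pn by simp
    next
      assume z: "\<forall>i<n. E $ (p i) = 0"
      have dE: "dim_vec E = n" unfolding E_def using C by simp
      show "E = 0\<^sub>v n"
      proof (rule eq_vecI)
        fix y assume "y < dim_vec (0\<^sub>v n)"
        hence y: "y < n" by simp
        obtain i where i: "i < n" "y = p i" using y pimg by (metis imageE lessThan_iff)
        show "E $ y = 0\<^sub>v n $ y" using z i y by simp
      qed (use dE in simp)
    qed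
    also have "\<dots> \<longleftrightarrow> (\<forall>i<m+a+b. (\<Sum>j<m+a+b. f i j * u $ j + g i j * u' $ j) = 0)"
      using Epi nsum by auto
    also have "\<dots> \<longleftrightarrow> (B_PQRS m a b PP QQ RR *\<^sub>v u' = A_PQRS m a b PP QQ RR SS *\<^sub>v u)"
      using core_equiv[OF u u'] by simp
    finally show "(A *\<^sub>v \<Psi> + B *\<^sub>v \<Psi>' = 0\<^sub>v n) \<longleftrightarrow>
        (B_PQRS m a b PP QQ RR *\<^sub>v perm_vec p \<Psi>' = A_PQRS m a b PP QQ RR SS *\<^sub>v perm_vec p \<Psi>)"
      unfolding u_def u'_def .
  qed
  show ?thesis using ge pperm ok equiv by blast
qed



lemma row_split:
  assumes M: "M \<in> carrier_mat (m+a+b) (m+a+b)" and v: "v \<in> carrier_vec (m+a+b)" and x: "x < m+a+b"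
  shows "(M *\<^sub>v v) $ x = (\<Sum>j<m. M $$ (x,j) * v $ j) + (\<Sum>k<a. M $$ (x,m+k) * v $ (m+k))
     + (\<Sum>k<b. M $$ (x,m+a+k) * v $ (m+a+k))"
  unfolding mat_vec_index[OF M v x] sum_lessThan_add by (simp add: add.assoc)

lemma sys_rows:
  assumes P: "P \<in> carrier_mat m b" and Q: "Q \<in> carrier_mat a b" and R: "R \<in> carrier_mat a m"
    and S: "S \<in> carrier_mat m m"
    and u: "u \<in> carrier_vec (m+a+b)" and u': "u' \<in> carrier_vec (m+a+b)"
  shows "(B_PQRS m a b P Q R *\<^sub>v u' = A_PQRS m a b P Q R S *\<^sub>v u) \<longleftrightarrow>
   (\<forall>i<m. u' $ i + (\<Sum>k<b. P $$ (i,k) * u' $ (m+a+k)) =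
       (\<Sum>k<m. S $$ (i,k) * u $ k) - (\<Sum>k<a. (\<Sum>l<m. S $$ (i,l) * cnj (R $$ (k,l))) * u $ (m+k))) \<and>
   (\<forall>i<a. (\<Sum>k<m. R $$ (i,k) * u' $ k) + u' $ (m+i) + (\<Sum>k<b. Q $$ (i,k) * u' $ (m+a+k)) = 0) \<and>
   (\<forall>i<b. 0 = - (\<Sum>k<m. cnj (P $$ (k,i)) * u $ k)
        + (\<Sum>k<a. cnj ((\<Sum>l<m. R $$ (k,l) * P $$ (l,i)) - Q $$ (k,i)) * u $ (m+k)) + u $ (m+a+i))"
proof -
  let ?n = "m+a+b"
  let ?B = "B_PQRS m a b P Q R" and ?A = "A_PQRS m a b P Q R S"
  have Bc: "?B \<in> carrier_mat ?n ?n" unfolding B_PQRS_def block3_def by simp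
  have Ac: "?A \<in> carrier_mat ?n ?n" unfolding A_PQRS_def block3_def by simp
  note Bi = B_PQRS_index[OF _ _ P Q R] and Ai = A_PQRS_index[OF _ _ P Q R S]
  have r1: "(?B *\<^sub>v u') $ i = u' $ i + (\<Sum>k<b. P $$ (i,k) * u' $ (m+a+k))"
    "(?A *\<^sub>v u) $ i = (\<Sum>k<m. S $$ (i,k) * u $ k) - (\<Sum>k<a. (\<Sum>l<m. S $$ (i,l) * cnj (R $$ (k,l))) * u $ (m+k))"
    if i: "i < m" for i
  proof -
    have xi: "i < ?n" using i by simp
    have "(\<Sum>j<m. ?B $$ (i,j) * u' $ j) = (\<Sum>j<m. u' $ j * (if i = j then 1 else 0))"
      using i by (intro sum.cong refl) (simp add: Bi)
    also have "\<dots> = u' $ i" using i by (simp add: sum_delta_mult')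
    finally have s1: "(\<Sum>j<m. ?B $$ (i,j) * u' $ j) = u' $ i" .
    have s2: "(\<Sum>k<a. ?B $$ (i,m+k) * u' $ (m+k)) = 0" using i by (intro sum.neutral) (simp add: Bi)
    have s3: "(\<Sum>k<b. ?B $$ (i,m+a+k) * u' $ (m+a+k)) = (\<Sum>k<b. P $$ (i,k) * u' $ (m+a+k))"
      using i by (intro sum.cong refl) (simp add: Bi)
    show "(?B *\<^sub>v u') $ i = u' $ i + (\<Sum>k<b. P $$ (i,k) * u' $ (m+a+k))"
      unfolding row_split[OF Bc u' xi] s1 s2 s3 by simp
    have t1: "(\<Sum>j<m. ?A $$ (i,j) * u $ j) = (\<Sum>k<m. S $$ (i,k) * u $ k)"
      using i by (intro sum.cong refl) (simp add: Ai)
    have "(\<Sum>k<a. ?A $$ (i,m+k) * u $ (m+k)) = (\<Sum>k<a. - ((\<Sum>l<m. S $$ (i,l) * cnj (R $$ (k,l))) * u $ (m+k)))"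
      using i by (intro sum.cong refl) (simp add: Ai)
    hence t2: "(\<Sum>k<a. ?A $$ (i,m+k) * u $ (m+k)) = - (\<Sum>k<a. (\<Sum>l<m. S $$ (i,l) * cnj (R $$ (k,l))) * u $ (m+k))"
      by (simp add: sum_negf)
    have t3: "(\<Sum>k<b. ?A $$ (i,m+a+k) * u $ (m+a+k)) = 0"
      using i by (intro sum.neutral) (simp add: Ai)
    show "(?A *\<^sub>v u) $ i = (\<Sum>k<m. S $$ (i,k) * u $ k) - (\<Sum>k<a. (\<Sum>l<m. S $$ (i,l) * cnj (R $$ (k,l))) * u $ (m+k))"
      unfolding row_split[OF Ac u xi] t1 t2 t3 by simp
  qed
  have r2: "(?B *\<^sub>v u') $ (m+i) = (\<Sum>k<m. R $$ (i,k) * u' $ k) + u' $ (m+i) + (\<Sum>k<b. Q $$ (i,k) * u' $ (m+a+k))"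
    "(?A *\<^sub>v u) $ (m+i) = 0"
    if i: "i < a" for i
  proof -
    have xi: "m+i < ?n" using i by simp
    have s1: "(\<Sum>j<m. ?B $$ (m+i,j) * u' $ j) = (\<Sum>k<m. R $$ (i,k) * u' $ k)"
      using i by (intro sum.cong refl) (simp add: Bi)
    have "(\<Sum>k<a. ?B $$ (m+i,m+k) * u' $ (m+k)) = (\<Sum>k<a. u' $ (m+k) * (if i = k then 1 else 0))"
      using i by (intro sum.cong refl) (simp add: Bi)
    also have "\<dots> = u' $ (m+i)" using i by (simp add: sum_delta_mult')
    finally have s2: "(\<Sum>k<a. ?B $$ (m+i,m+k) * u' $ (m+k)) = u' $ (m+i)" .
    have s3: "(\<Sum>k<b. ?B $$ (m+i,m+a+k) * u' $ (m+a+k)) = (\<Sum>k<b. Q $$ (i,k) * u' $ (m+a+k))"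
      using i by (intro sum.cong refl) (simp add: Bi)
    show "(?B *\<^sub>v u') $ (m+i) = (\<Sum>k<m. R $$ (i,k) * u' $ k) + u' $ (m+i) + (\<Sum>k<b. Q $$ (i,k) * u' $ (m+a+k))"
      unfolding row_split[OF Bc u' xi] s1 s2 s3 ..
    show "(?A *\<^sub>v u) $ (m+i) = 0"
      unfolding row_split[OF Ac u xi] using i by (simp add: Ai)
  qed
  have r3: "(?B *\<^sub>v u') $ (m+a+i) = 0"
    "(?A *\<^sub>v u) $ (m+a+i) = - (\<Sum>k<m. cnj (P $$ (k,i)) * u $ k)
        + (\<Sum>k<a. cnj ((\<Sum>l<m. R $$ (k,l) * P $$ (l,i)) - Q $$ (k,i)) * u $ (m+k)) + u $ (m+a+i)"
    if i: "i < b" for i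
  proof -
    have xi: "m+a+i < ?n" using i by simp
    show "(?B *\<^sub>v u') $ (m+a+i) = 0"
      unfolding row_split[OF Bc u' xi] using i by (simp add: Bi)
    have t1: "(\<Sum>j<m. ?A $$ (m+a+i,j) * u $ j) = - (\<Sum>k<m. cnj (P $$ (k,i)) * u $ k)"
      using i by (simp add: Ai sum_negf[symmetric])
    have t2: "(\<Sum>k<a. ?A $$ (m+a+i,m+k) * u $ (m+k)) = (\<Sum>k<a. cnj ((\<Sum>l<m. R $$ (k,l) * P $$ (l,i)) - Q $$ (k,i)) * u $ (m+k))"
      using i by (intro sum.cong refl) (simp add: Ai)
    have "(\<Sum>k<b. ?A $$ (m+a+i,m+a+k) * u $ (m+a+k)) = (\<Sum>k<b. u $ (m+a+k) * (if i = k then 1 else 0))"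
      using i by (intro sum.cong refl) (simp add: Ai)
    also have "\<dots> = u $ (m+a+i)" using i by (simp add: sum_delta_mult')
    finally have t3: "(\<Sum>k<b. ?A $$ (m+a+i,m+a+k) * u $ (m+a+k)) = u $ (m+a+i)" .
    show "(?A *\<^sub>v u) $ (m+a+i) = - (\<Sum>k<m. cnj (P $$ (k,i)) * u $ k)
        + (\<Sum>k<a. cnj ((\<Sum>l<m. R $$ (k,l) * P $$ (l,i)) - Q $$ (k,i)) * u $ (m+k)) + u $ (m+a+i)"
      unfolding row_split[OF Ac u xi] t1 t2 t3 ..
  qed
  have "(?B *\<^sub>v u' = ?A *\<^sub>v u) \<longleftrightarrow> (\<forall>x<?n. (?B *\<^sub>v u') $ x = (?A *\<^sub>v u) $ x)"
  proof
    assume "\<forall>x<?n. (?B *\<^sub>v u') $ x = (?A *\<^sub>v u) $ x"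
    thus "?B *\<^sub>v u' = ?A *\<^sub>v u" using Bc Ac by (intro eq_vecI) auto
  qed simp
  also have "\<dots> \<longleftrightarrow> (\<forall>i<m. (?B *\<^sub>v u') $ i = (?A *\<^sub>v u) $ i) \<and> (\<forall>i<a. (?B *\<^sub>v u') $ (m+i) = (?A *\<^sub>v u) $ (m+i))
      \<and> (\<forall>i<b. (?B *\<^sub>v u') $ (m+a+i) = (?A *\<^sub>v u) $ (m+a+i))"
  proof (intro iffI conjI allI impI)
    assume H: "(\<forall>i<m. (?B *\<^sub>v u') $ i = (?A *\<^sub>v u) $ i) \<and> (\<forall>i<a. (?B *\<^sub>v u') $ (m+i) = (?A *\<^sub>v u) $ (m+i))
      \<and> (\<forall>i<b. (?B *\<^sub>v u') $ (m+a+i) = (?A *\<^sub>v u) $ (m+a+i))"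
    fix x assume x: "x < ?n"
    show "(?B *\<^sub>v u') $ x = (?A *\<^sub>v u) $ x"
    proof (cases "x < m")
      case True thus ?thesis using H by blast
    next
      case F: False
      show ?thesis
      proof (cases "x < m+a")
        case True
        then obtain i where "x = m+i" "i < a" using F by (metis add_diff_inverse_nat add_less_cancel_left)
        thus ?thesis using H by blast
      next
        case False
        then obtain i where "x = m+a+i" "i < b" using x by (metis add_diff_inverse_nat add_less_cancel_left)
        thus ?thesis using H by blast
      qed
    qed
  qed auto
  finally show ?thesis using r1 r2 r3 by simp
qed



lemma uniq_sys:
  assumes ok1: "PQRS_ok m a b P Q R S" and ok2: "PQRS_ok m a b P' Q' R' S'"
    and eqv: "\<And>u u'. u \<in> carrier_vec (m+a+b) \<Longrightarrow> u' \<in> carrier_vec (m+a+b) \<Longrightarrow>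
       (B_PQRS m a b P Q R *\<^sub>v u' = A_PQRS m a b P Q R S *\<^sub>v u) \<longleftrightarrow>
       (B_PQRS m a b P' Q' R' *\<^sub>v u' = A_PQRS m a b P' Q' R' S' *\<^sub>v u)"
  shows "P = P' \<and> Q = Q' \<and> R = R' \<and> S = S'"
proof -
  let ?n = "m+a+b"
  have P: "P \<in> carrier_mat m b" and Q: "Q \<in> carrier_mat a b" and R: "R \<in> carrier_mat a m"
    and S: "S \<in> carrier_mat m m" and Sinv: "invertible_mat S"
    using ok1 unfolding PQRS_ok_def by auto
  have P': "P' \<in> carrier_mat m b" and Q': "Q' \<in> carrier_mat a b" and R': "R' \<in> carrier_mat a m"
    and S': "S' \<in> carrier_mat m m"
    using ok2 unfolding PQRS_ok_def by auto
  note rows1 = sys_rows[OF P Q R S] and rows2 = sys_rows[OF P' Q' R' S']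
  have T1: "(\<forall>i<m. S $$ (i,j) = S' $$ (i,j)) \<and> (\<forall>k<b. P $$ (j,k) = P' $$ (j,k)) \<and>
     (\<forall>i'<a. (\<Sum>l<m. R' $$ (i',l) * S $$ (l,j)) = (\<Sum>l<m. R $$ (i',l) * S $$ (l,j)))"
    if j: "j < m" for j
  proof -
    define u :: "complex vec" where "u = vec ?n (\<lambda>x. if x < m then (if x = j then 1 else 0) else if x < m+a then 0 else cnj (P $$ (j,x-m-a)))"
    define u' :: "complex vec" where "u' = vec ?n (\<lambda>x. if x < m then S $$ (x,j) else if x < m+a then - (\<Sum>l<m. R $$ (x-m,l) * S $$ (l,j)) else 0)"
    have u: "u \<in> carrier_vec ?n" and u': "u' \<in> carrier_vec ?n" unfolding u_def u'_def by auto
    have ua: "u $ x = (if x = j then 1 else 0)" if "x < m" for x using that unfolding u_def by simp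
    have ub: "u $ (m+x) = 0" if "x < a" for x using that unfolding u_def by simp
    have uc: "u $ (m+a+x) = cnj (P $$ (j,x))" if "x < b" for x using that unfolding u_def by simp
    have u'a: "u' $ x = S $$ (x,j)" if "x < m" for x using that unfolding u'_def by simp
    have u'b: "u' $ (m+x) = - (\<Sum>l<m. R $$ (x,l) * S $$ (l,j))" if "x < a" for x using that unfolding u'_def by simp
    have u'c: "u' $ (m+a+x) = 0" if "x < b" for x using that unfolding u'_def by simp
    have sys1: "B_PQRS m a b P Q R *\<^sub>v u' = A_PQRS m a b P Q R S *\<^sub>v u"
      unfolding rows1[OF u u'] using j by (simp add: ua ub uc u'a u'b u'c sum_delta_mult)
    hence sys2: "B_PQRS m a b P' Q' R' *\<^sub>v u' = A_PQRS m a b P' Q' R' S' *\<^sub>v u" using eqv[OF u u'] by simp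
    note s2 = sys2[unfolded rows2[OF u u']]
    from s2 have c1: "\<forall>i<m. u' $ i + (\<Sum>k<b. P' $$ (i,k) * u' $ (m+a+k)) =
       (\<Sum>k<m. S' $$ (i,k) * u $ k) - (\<Sum>k<a. (\<Sum>l<m. S' $$ (i,l) * cnj (R' $$ (k,l))) * u $ (m+k))"
      and c2: "\<forall>i<a. (\<Sum>k<m. R' $$ (i,k) * u' $ k) + u' $ (m+i) + (\<Sum>k<b. Q' $$ (i,k) * u' $ (m+a+k)) = 0"
      and c3: "\<forall>i<b. 0 = - (\<Sum>k<m. cnj (P' $$ (k,i)) * u $ k)
        + (\<Sum>k<a. cnj ((\<Sum>l<m. R' $$ (k,l) * P' $$ (l,i)) - Q' $$ (k,i)) * u $ (m+k)) + u $ (m+a+i)"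
      by auto
    have e1: "S $$ (i,j) = S' $$ (i,j)" if i: "i < m" for i
      using c1[rule_format, OF i] i j by (simp add: ua ub uc u'a u'b u'c sum_delta_mult)
    have e2: "P $$ (j,k) = P' $$ (j,k)" if k: "k < b" for k
      using c3[rule_format, OF k] k j by (simp add: ua ub uc u'a u'b u'c sum_delta_mult)
    have e3: "(\<Sum>l<m. R' $$ (i',l) * S $$ (l,j)) = (\<Sum>l<m. R $$ (i',l) * S $$ (l,j))" if i': "i' < a" for i'
      using c2[rule_format, OF i'] i' j by (simp add: ua ub uc u'a u'b u'c sum_delta_mult)
    show ?thesis using e1 e2 e3 by blast
  qed
  have SS: "S = S'" by (rule eq_matI) (use S S' T1 in auto)
  have PP: "P = P'"
  proof (rule eq_matI)
    fix j k assume "j < dim_row P'" "k < dim_col P'"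
    hence "j < m" "k < b" using P' by auto
    thus "P $$ (j,k) = P' $$ (j,k)" using T1[of j] by blast
  qed (use P P' in auto)
  have RS: "R' * S = R * S"
  proof (rule eq_matI)
    fix i j assume "i < dim_row (R * S)" "j < dim_col (R * S)"
    hence i: "i < a" and j: "j < m" using R S by auto
    show "(R' * S) $$ (i,j) = (R * S) $$ (i,j)"
      unfolding mat_mult_index[OF R' S i j] mat_mult_index[OF R S i j] using T1[OF j] i by blast
  qed (use R R' S in auto)
  obtain T where T: "S * T = 1\<^sub>m m" "T * S = 1\<^sub>m (dim_row T)"
    using Sinv S unfolding invertible_mat_def inverts_mat_def by auto
  have Tc: "T \<in> carrier_mat m m"
  proof -
    have "dim_col T = m" using arg_cong[OF T(1), of dim_col] by simp
    moreover have "dim_row T = m" using arg_cong[OF T(2), of dim_col] S by simp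
    ultimately show ?thesis by auto
  qed
  have RR: "R = R'"
  proof -
    have "R' = R' * (S * T)" using R' T(1) by simp
    also have "\<dots> = (R' * S) * T" using assoc_mult_mat[OF R' S Tc] by simp
    also have "\<dots> = (R * S) * T" unfolding RS ..
    also have "\<dots> = R * (S * T)" using assoc_mult_mat[OF R S Tc] by simp
    also have "\<dots> = R" using R T(1) by simp
    finally show ?thesis by simp
  qed
  have T2: "\<forall>i<a. Q $$ (i,j) = Q' $$ (i,j)" if j: "j < b" for j
  proof -
    define u :: "complex vec" where "u = 0\<^sub>v ?n"
    define u' :: "complex vec" where "u' = vec ?n (\<lambda>x. if x < m then - P $$ (x,j) else if x < m+a
        then (\<Sum>l<m. R $$ (x-m,l) * P $$ (l,j)) - Q $$ (x-m,j) else (if x = m+a+j then 1 else 0))"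
    have u: "u \<in> carrier_vec ?n" and u': "u' \<in> carrier_vec ?n" unfolding u_def u'_def by auto
    have u0: "u $ x = 0" if "x < ?n" for x using that unfolding u_def by simp
    have ua1: "u $ x = 0" if "x < m" for x using u0 that by auto
    have ua2: "u $ (m+y) = 0" if "y < a" for y using u0 that by auto
    have ua3: "u $ (m+a+z) = 0" if "z < b" for z using u0 that by auto
    have u'a: "u' $ x = - P $$ (x,j)" if "x < m" for x using that unfolding u'_def by simp
    have u'b: "u' $ (m+x) = (\<Sum>l<m. R $$ (x,l) * P $$ (l,j)) - Q $$ (x,j)" if "x < a" for x using that unfolding u'_def by simp
    have u'c: "u' $ (m+a+x) = (if x = j then 1 else 0)" if "x < b" for x using that unfolding u'_def by auto
    have sys1: "B_PQRS m a b P Q R *\<^sub>v u' = A_PQRS m a b P Q R S *\<^sub>v u"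
      unfolding rows1[OF u u'] using j by (simp add: ua1 ua2 ua3 u'a u'b u'c sum_delta_mult sum_delta_mult' sum_negf)
    hence sys2: "B_PQRS m a b P' Q' R' *\<^sub>v u' = A_PQRS m a b P' Q' R' S' *\<^sub>v u" using eqv[OF u u'] by simp
    from sys2[unfolded rows2[OF u u']] have
      c2: "\<forall>i<a. (\<Sum>k<m. R' $$ (i,k) * u' $ k) + u' $ (m+i) + (\<Sum>k<b. Q' $$ (i,k) * u' $ (m+a+k)) = 0"
      by auto
    show ?thesis
    proof (intro allI impI)
      fix i assume i: "i < a"
      show "Q $$ (i,j) = Q' $$ (i,j)"
        using c2[rule_format, OF i] i j unfolding RR[symmetric] by (simp add: u'a u'b u'c sum_delta_mult sum_delta_mult' sum_negf)
    qed
  qed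
  have QQ: "Q = Q'"
  proof (rule eq_matI)
    fix i j assume "i < dim_row Q'" "j < dim_col Q'"
    hence "i < a" "j < b" using Q' by auto
    thus "Q $$ (i,j) = Q' $$ (i,j)" using T2 by blast
  qed (use Q Q' in auto)
  show ?thesis using PP QQ RR SS by simp
qed



lemma perm_vec_surj:
  assumes p: "p permutes {..<n}" and u: "u \<in> carrier_vec n"
  shows "vec n (\<lambda>i. u $ inv_into UNIV p i) \<in> carrier_vec n" "perm_vec p (vec n (\<lambda>i. u $ inv_into UNIV p i)) = u"
proof -
  show "vec n (\<lambda>i. u $ inv_into UNIV p i) \<in> carrier_vec n" by simp
  show "perm_vec p (vec n (\<lambda>i. u $ inv_into UNIV p i)) = u"
  proof (rule eq_vecI)
    fix i assume "i < dim_vec u"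
    hence i: "i < n" using u by simp
    have pi: "p i < n" using permutes_in_image[OF p, of i] i by simp
    show "perm_vec p (vec n (\<lambda>i. u $ inv_into UNIV p i)) $ i = u $ i"
      unfolding perm_vec_def using i pi permutes_inverses(2)[OF p, of i] by simp
  qed (use u in \<open>simp add: perm_vec_def\<close>)
qed

theorem theorem1:
  fixes n :: nat and A B :: "complex mat"
  assumes adm: "admissible n A B"
  shows "vec_space.rank n A + vec_space.rank n B \<ge> n \<and>
    (let rA = vec_space.rank n A; rB = vec_space.rank n B;
         m = rA + rB - n; a = n - rA; b = n - rB in
      (\<exists>p. p permutes {..<n} \<and>
         (\<exists>P Q R S. PQRS_ok m a b P Q R S \<and> PQRS_equiv n A B p m a b P Q R S)) \<and>
      (\<forall>p P Q R S P' Q' R' S'. p permutes {..<n} \<longrightarrow>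
         PQRS_ok m a b P Q R S \<longrightarrow> PQRS_equiv n A B p m a b P Q R S \<longrightarrow>
         PQRS_ok m a b P' Q' R' S' \<longrightarrow> PQRS_equiv n A B p m a b P' Q' R' S' \<longrightarrow>
         P = P' \<and> Q = Q' \<and> R = R' \<and> S = S'))"
proof -
  define rA where "rA = vec_space.rank n A"
  define rB where "rB = vec_space.rank n B"
  define m where "m = rA + rB - n"
  define a where "a = n - rA"
  define b where "b = n - rB"
  have A: "A \<in> carrier_mat n n" and B: "B \<in> carrier_mat n n" using adm unfolding admissible_def by auto
  have ex: "rA + rB \<ge> n \<and> (\<exists>p. p permutes {..<n} \<and>
     (\<exists>P Q R S. PQRS_ok m a b P Q R S \<and> PQRS_equiv n A B p m a b P Q R S))"
    using existence[OF adm] unfolding rA_def rB_def m_def a_def b_def by simp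
  have rAn: "rA \<le> n" unfolding rA_def by (rule vec_space.rank_le_nc[OF A])
  have rBn: "rB \<le> n" unfolding rB_def by (rule vec_space.rank_le_nc[OF B])
  have nsum: "m + a + b = n" unfolding m_def a_def b_def using ex rAn rBn by simp
  have uniq: "P = P' \<and> Q = Q' \<and> R = R' \<and> S = S'"
    if p: "p permutes {..<n}" and ok1: "PQRS_ok m a b P Q R S" and eq1: "PQRS_equiv n A B p m a b P Q R S"
      and ok2: "PQRS_ok m a b P' Q' R' S'" and eq2: "PQRS_equiv n A B p m a b P' Q' R' S'"
    for p P Q R S P' Q' R' S'
  proof (rule uniq_sys[OF ok1 ok2])
    fix u u' :: "complex vec" assume u: "u \<in> carrier_vec (m+a+b)" and u': "u' \<in> carrier_vec (m+a+b)"
    hence un: "u \<in> carrier_vec n" "u' \<in> carrier_vec n" using nsum by auto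
    note s = perm_vec_surj[OF p un(1)] and s' = perm_vec_surj[OF p un(2)]
    have "(B_PQRS m a b P Q R *\<^sub>v u' = A_PQRS m a b P Q R S *\<^sub>v u) \<longleftrightarrow>
      (A *\<^sub>v vec n (\<lambda>i. u $ inv_into UNIV p i) + B *\<^sub>v vec n (\<lambda>i. u' $ inv_into UNIV p i) = 0\<^sub>v n)"
      using eq1 s s' unfolding PQRS_equiv_def by metis
    also have "\<dots> \<longleftrightarrow> (B_PQRS m a b P' Q' R' *\<^sub>v u' = A_PQRS m a b P' Q' R' S' *\<^sub>v u)"
      using eq2 s s' unfolding PQRS_equiv_def by metis
    finally show "(B_PQRS m a b P Q R *\<^sub>v u' = A_PQRS m a b P Q R S *\<^sub>v u) \<longleftrightarrow>
      (B_PQRS m a b P' Q' R' *\<^sub>v u' = A_PQRS m a b P' Q' R' S' *\<^sub>v u)" .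
  qed
  show ?thesis unfolding Let_def rA_def[symmetric] rB_def[symmetric] m_def[symmetric] a_def[symmetric] b_def[symmetric]
    using ex uniq by blast
qed


end
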